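(* Define: - $K_n=\overline{\Sigma}_c^{-1}H_n^TR_n^{-1}$ for $n=1,\dots,N$; - $\mathcal{K}=\mathrm{diag}(K_1,\dots,K_N)$ (block diagonal, of size $NM\times\sum_nM_n$); - $\mathcal{H}=\mathrm{diag}(H_1,\dots,H_N)$ (block diagonal, of size $\sum_nM_n\times NM$). Then there exist $\varepsilon_{\mathcal{K}}>0$, a deterministic time $t_{\mathcal{K}}$ and a constant $c_{\mathcal{K}}$ such that $$\mathbf{z}^T\big(\beta_t\overline{L}\otimes I_M+\alpha_t\widetilde{\mathcal{K}}\mathcal{H}\big)\mathbf{z}\ge c_{\mathcal{K}}\alpha_t\|\mathbf{z}\|^2$$ for all $t\ge t_{\mathcal{K}}$, all $\mathbf{z}\in\mathbb{R}^{NM}$, and all matrices $\widetilde{\mathcal{K}}\in\mathbb{R}^{NM\times\sum_nM_n}$ satisfying $\|\widetilde{\mathcal{K}}\mathcal{H}-\mathcal{K}\mathcal{H}\|\le\varepsilon_{\mathcal{K}}$.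
   Context: The data are as follows. - $H_n\in\mathbb{R}^{M_n\times M}$ for $n=1,\dots,N$. - $R_n\in\mathbb{R}^{M_n\times M_n}$ are symmetric positive definite. - $\overline{\Sigma}_c=\frac1N\sum_{n=1}^NH_n^TR_n^{-1}H_n$ is assumed invertible. - $\overline{L}$ is the expectation of a random $N\times N$ graph Laplacian (of simple undirected graphs on $\{1,\dots,N\}$), with $\lambda_2(\overline{L})>0$, where $\lambda_2$ is the second smallest eigenvalue. - The weights are $\alpha_t=a/(t+1)^{\tau_1}$ and $\beta_t=b/(t+1)^{\tau_2}$ with $a,b>0$, $0<\tau_2\le\tau_1\le1$, and $\tau_1>\tau_2+\frac1{2+\varepsilon_1}+\frac12$ for some $\varepsilon_1>0$ (in particular $\beta_t/\alpha_t\to\infty$). $\otimes$ is the Kronecker product and $\|\cdot\|$ the Euclidean norm or induced matrix 2-norm. *)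

theory Defs
  imports "Jordan_Normal_Form.Char_Poly" "Jordan_Normal_Form.Gauss_Jordan_Elimination"
    "HOL-Probability.Probability_Mass_Function"
begin

definition vnorm :: "real Matrix.vec \<Rightarrow> real" where
  "vnorm v = sqrt (v \<bullet> v)"

definition opnorm :: "real mat \<Rightarrow> real" where
  "opnorm A = Sup {vnorm (A *\<^sub>v v) / vnorm v | v. v \<in> carrier_vec (dim_col A)}"

definition minv :: "real mat \<Rightarrow> real mat" where
  "minv A = the (mat_inverse A)"

definition kron :: "real mat \<Rightarrow> real mat \<Rightarrow> real mat" where
  "kron A B = Matrix.mat (dim_row A * dim_row B) (dim_col A * dim_col B)
     (\<lambda>(i,j). A $$ (i div dim_row B, j div dim_col B) * B $$ (i mod dim_row B, j mod dim_col B))"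

definition simple_graph :: "nat \<Rightarrow> (nat \<times> nat) set \<Rightarrow> bool" where
  "simple_graph N E \<longleftrightarrow> E \<subseteq> {0..<N} \<times> {0..<N} \<and> sym E \<and> irrefl E"

definition laplacian :: "nat \<Rightarrow> (nat \<times> nat) set \<Rightarrow> real mat" where
  "laplacian N E = Matrix.mat N N (\<lambda>(i,j).
     if i = j then real (card {k. k < N \<and> (i,k) \<in> E})
     else if (i,j) \<in> E then -1 else 0)"

definition expected_laplacian :: "nat \<Rightarrow> (nat \<times> nat) set pmf \<Rightarrow> real mat" where
  "expected_laplacian N G = Matrix.mat N N (\<lambda>ij. measure_pmf.expectation G (\<lambda>E. laplacian N E $$ ij))"

definition sorted_eigenvalues :: "real mat \<Rightarrow> real list" where
  "sorted_eigenvalues A = sorted_list_of_multiset (proots (char_poly A))"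

definition lambda2 :: "real mat \<Rightarrow> real" where
  "lambda2 A = sorted_eigenvalues A ! 1"

definition pos_def :: "real mat \<Rightarrow> bool" where
  "pos_def A \<longleftrightarrow> (\<forall>v \<in> carrier_vec (dim_row A). v \<noteq> 0\<^sub>v (dim_row A) \<longrightarrow> v \<bullet> (A *\<^sub>v v) > 0)"

end

theory Submission
  imports Defs
begin

lemma sum_split_blocks:
  fixes f :: "nat \<Rightarrow> 'a::comm_monoid_add"
  shows "(\<Sum>i<N*M. f i) = (\<Sum>k<N. \<Sum>c<M. f (k*M+c))"
proof (induction N)
  case 0 then show ?case by simp
next
  case (Suc N)
  have "{..<Suc N * M} = {..<N*M} \<union> {N*M..<N*M+M}" by auto
  then have "(\<Sum>i<Suc N*M. f i) = (\<Sum>i<N*M. f i) + (\<Sum>i\<in>{N*M..<N*M+M}. f i)"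
    by (simp add: sum.union_disjoint ivl_disj_int)
  also have "(\<Sum>i\<in>{N*M..<N*M+M}. f i) = (\<Sum>c<M. f (N*M+c))"
  proof -
    have "(\<Sum>i\<in>{N*M..<N*M+M}. f i) = (\<Sum>i\<in>{0+N*M..<M+N*M}. f i)" by (simp add: add.commute)
    also have "\<dots> = (\<Sum>c\<in>{0..<M}. f (c + N*M))" by (rule sum.shift_bounds_nat_ivl)
    finally show ?thesis by (simp add: lessThan_atLeast0 add.commute)
  qed
  finally show ?case using Suc by simp
qed

lemma lap_entry:
  assumes "simple_graph N E" "i < N" "j < N"
  shows "laplacian N E $$ (i,j) = (if i = j then (\<Sum>k<N. if (i,k) \<in> E then 1 else 0) else 0)
           - (if (i,j) \<in> E then 1 else 0)"
proof -
  have irr: "(i,i) \<notin> E" using assms(1) unfolding simple_graph_def irrefl_def by auto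
  have "real (card {k. k < N \<and> (i,k) \<in> E}) = (\<Sum>k<N. if (i,k) \<in> E then 1 else 0)"
  proof -
    have ce: "{k. k < N \<and> (i,k) \<in> E} = {..<N} \<inter> {k. (i,k) \<in> E}" by auto
    show ?thesis by (simp add: sum.If_cases ce)
  qed
  then show ?thesis using assms irr unfolding laplacian_def by auto
qed

lemma lap_sym:
  assumes "simple_graph N E" "i < N" "j < N"
  shows "laplacian N E $$ (i,j) = laplacian N E $$ (j,i)"
  using assms unfolding laplacian_def simple_graph_def sym_def by auto

lemma lap_rowsum:
  assumes "simple_graph N E" "i < N"
  shows "(\<Sum>j<N. laplacian N E $$ (i,j)) = 0"
proof -
  have "(\<Sum>j<N. laplacian N E $$ (i,j)) = (\<Sum>j<N. (if i = j then (\<Sum>k<N. if (i,k) \<in> E then 1 else 0) else 0)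
           - (if (i,j) \<in> E then 1 else 0))"
    using lap_entry[OF assms(1) assms(2)] by (intro sum.cong) auto
  also have "\<dots> = 0" using assms(2) by (simp add: sum_subtractf)
  finally show ?thesis .
qed

lemma lap_quad:
  fixes x :: "nat \<Rightarrow> real"
  assumes "simple_graph N E"
  shows "(\<Sum>i<N. \<Sum>j<N. x i * laplacian N E $$ (i,j) * x j)
       = (\<Sum>i<N. \<Sum>j<N. if (i,j) \<in> E then (x i - x j)^2 / 2 else 0)"
proof -
  let ?e = "\<lambda>i j. if (i,j) \<in> E then 1 else (0::real)"
  have symE: "\<And>i j. ?e i j = ?e j i" using assms unfolding simple_graph_def sym_def by auto
  have "(\<Sum>i<N. \<Sum>j<N. x i * laplacian N E $$ (i,j) * x j)
      = (\<Sum>i<N. \<Sum>j<N. x i * ((if i = j then (\<Sum>k<N. ?e i k) else 0) - ?e i j) * x j)"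
    using lap_entry[OF assms] by (intro sum.cong) auto
  also have "\<dots> = (\<Sum>i<N. (\<Sum>j<N. x i * (if i = j then (\<Sum>k<N. ?e i k) else 0) * x j) - (\<Sum>j<N. x i * ?e i j * x j))"
    by (simp add: algebra_simps sum_subtractf)
  also have "\<dots> = (\<Sum>i<N. (\<Sum>k<N. ?e i k * x i * x i) - (\<Sum>j<N. ?e i j * x i * x j))"
  proof (intro sum.cong refl)
    fix i assume i: "i \<in> {..<N}"
    have "(\<Sum>j<N. x i * (if i = j then (\<Sum>k<N. ?e i k) else 0) * x j) = x i * (\<Sum>k<N. ?e i k) * x i"
      using i by (simp add: if_distrib if_distribR sum.delta cong: if_cong)
    then show "(\<Sum>j<N. x i * (if i = j then (\<Sum>k<N. ?e i k) else 0) * x j) - (\<Sum>j<N. x i * ?e i j * x j)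
       = (\<Sum>k<N. ?e i k * x i * x i) - (\<Sum>j<N. ?e i j * x i * x j)"
      by (simp add: sum_distrib_left sum_distrib_right algebra_simps)
  qed
  also have "\<dots> = (\<Sum>i<N. \<Sum>j<N. ?e i j * (x i * x i - x i * x j))"
    by (simp add: sum_subtractf algebra_simps)
  finally have A: "(\<Sum>i<N. \<Sum>j<N. x i * laplacian N E $$ (i,j) * x j) = (\<Sum>i<N. \<Sum>j<N. ?e i j * (x i * x i - x i * x j))" .
  have B: "(\<Sum>i<N. \<Sum>j<N. ?e i j * (x i * x i - x i * x j)) = (\<Sum>i<N. \<Sum>j<N. ?e i j * (x j * x j - x j * x i))"
    by (subst sum.swap) (simp add: symE)
  have "(\<Sum>i<N. \<Sum>j<N. if (i,j) \<in> E then (x i - x j)^2 / 2 else 0)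
      = (\<Sum>i<N. \<Sum>j<N. (?e i j * (x i * x i - x i * x j) + ?e i j * (x j * x j - x j * x i)) / 2)"
    by (intro sum.cong) (auto simp: power2_eq_square field_simps)
  also have "\<dots> = ((\<Sum>i<N. \<Sum>j<N. ?e i j * (x i * x i - x i * x j)) + (\<Sum>i<N. \<Sum>j<N. ?e i j * (x j * x j - x j * x i))) / 2"
    by (simp only: sum_divide_distrib[symmetric] sum.distrib)
  finally show ?thesis using A B by simp
qed

lemma lap_psd:
  fixes x :: "nat \<Rightarrow> real"
  assumes "simple_graph N E"
  shows "(\<Sum>i<N. \<Sum>j<N. x i * laplacian N E $$ (i,j) * x j) \<ge> 0"
  unfolding lap_quad[OF assms] by (intro sum_nonneg) auto


lemma lbar_entry:
  assumes G: "\<And>E. E \<in> set_pmf G \<Longrightarrow> simple_graph N E" and ij: "i < N" "j < N"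
  shows "expected_laplacian N G $$ (i,j) = (\<Sum>E\<in>set_pmf G. pmf G E * laplacian N E $$ (i,j))"
    and "finite (set_pmf G)"
proof -
  have sub: "set_pmf G \<subseteq> Pow ({0..<N} \<times> {0..<N})" using G unfolding simple_graph_def by auto
  show fin: "finite (set_pmf G)" by (rule finite_subset[OF sub]) auto
  have "expected_laplacian N G $$ (i,j) = measure_pmf.expectation G (\<lambda>E. laplacian N E $$ (i,j))"
    unfolding expected_laplacian_def using ij by simp
  also have "\<dots> = (\<Sum>E\<in>set_pmf G. pmf G E *\<^sub>R laplacian N E $$ (i,j))"
    by (rule integral_measure_pmf[OF fin]) auto
  finally show "expected_laplacian N G $$ (i,j) = (\<Sum>E\<in>set_pmf G. pmf G E * laplacian N E $$ (i,j))" by simp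
qed

lemma lbar_props:
  assumes G: "\<And>E. E \<in> set_pmf G \<Longrightarrow> simple_graph N E"
  defines "L \<equiv> expected_laplacian N G"
  shows "L \<in> carrier_mat N N"
    and "\<And>i j. i < N \<Longrightarrow> j < N \<Longrightarrow> L $$ (i,j) = L $$ (j,i)"
    and "\<And>i. i < N \<Longrightarrow> (\<Sum>j<N. L $$ (i,j)) = 0"
    and "\<And>x. (\<Sum>i<N. \<Sum>j<N. x i * L $$ (i,j) * x j) \<ge> 0"
proof -
  show "L \<in> carrier_mat N N" unfolding L_def expected_laplacian_def by simp
  show "\<And>i j. i < N \<Longrightarrow> j < N \<Longrightarrow> L $$ (i,j) = L $$ (j,i)"
    unfolding L_def using lbar_entry[OF G] lap_sym[OF G] by (simp cong: sum.cong)
  show "\<And>i. i < N \<Longrightarrow> (\<Sum>j<N. L $$ (i,j)) = 0"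
  proof -
    fix i assume i: "i < N"
    have "(\<Sum>j<N. L $$ (i,j)) = (\<Sum>j<N. \<Sum>E\<in>set_pmf G. pmf G E * laplacian N E $$ (i,j))"
      unfolding L_def using lbar_entry[OF G] i by (intro sum.cong) auto
    also have "\<dots> = (\<Sum>E\<in>set_pmf G. pmf G E * (\<Sum>j<N. laplacian N E $$ (i,j)))"
      by (subst sum.swap) (simp add: sum_distrib_left)
    also have "\<dots> = 0" using i by (simp add: lap_rowsum[OF G])
    finally show "(\<Sum>j<N. L $$ (i,j)) = 0" .
  qed
  show "\<And>x. (\<Sum>i<N. \<Sum>j<N. x i * L $$ (i,j) * x j) \<ge> 0"
  proof -
    fix x :: "nat \<Rightarrow> real"
    have "(\<Sum>i<N. \<Sum>j<N. x i * L $$ (i,j) * x j)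
       = (\<Sum>i<N. \<Sum>j<N. \<Sum>E\<in>set_pmf G. pmf G E * (x i * laplacian N E $$ (i,j) * x j))"
      unfolding L_def using lbar_entry[OF G]
      by (intro sum.cong refl) (simp add: sum_distrib_left sum_distrib_right algebra_simps)
    also have "\<dots> = (\<Sum>E\<in>set_pmf G. pmf G E * (\<Sum>i<N. \<Sum>j<N. x i * laplacian N E $$ (i,j) * x j))"
      by (simp add: sum_distrib_left sum.swap[of _ "set_pmf G"])
    also have "\<dots> \<ge> 0" by (rule sum_nonneg, rule mult_nonneg_nonneg[OF pmf_nonneg], simp add: lap_psd[OF G])
    finally show "(\<Sum>i<N. \<Sum>j<N. x i * L $$ (i,j) * x j) \<ge> 0" .
  qed
qed


lemma mult_mat_vec_vec_entry:
  assumes "L \<in> carrier_mat n n" "r < n"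
  shows "(L *\<^sub>v Matrix.vec n f) $ r = (\<Sum>j<n. L $$ (r,j) * f j)"
  using assms by (simp add: mult_mat_vec_def scalar_prod_def row_def lessThan_atLeast0)

lemma sum_skip:
  fixes f :: "nat \<Rightarrow> 'a::ab_group_add"
  assumes "i < N"
  shows "(\<Sum>j<N-1. f (if j < i then j else Suc j)) = (\<Sum>j<N. f j) - f i"
proof -
  let ?s = "\<lambda>j. if j < i then j else Suc j"
  have inj: "inj_on ?s {..<N-1}" by (auto simp: inj_on_def split: if_splits)
  have img1: "?s ` {..<N-1} \<subseteq> {..<N} - {i}" using assms by auto
  have img2: "{..<N} - {i} \<subseteq> ?s ` {..<N-1}"
  proof
    fix k
    assume k: "k \<in> {..<N} - {i}"
    show "k \<in> ?s ` {..<N-1}"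
    proof (cases "k < i")
      case True then show ?thesis using k assms by (intro image_eqI[of _ _ k]) auto
    next
      case False then have "k = ?s (k - 1)" "k - 1 < N - 1" using k by auto
      then show ?thesis by blast
    qed
  qed
  have img: "?s ` {..<N-1} = {..<N} - {i}" using img1 img2 by (rule subset_antisym)
  have "(\<Sum>j<N-1. f (?s j)) = (\<Sum>k\<in>{..<N} - {i}. f k)"
    using sum.reindex[OF inj, of f] img by simp
  also have "\<dots> = (\<Sum>j<N. f j) - f i" using assms by (simp add: sum_diff1)
  finally show ?thesis .
qed

lemma sorted_second_zero:
  fixes P :: "real multiset"
  assumes nn: "\<And>r. r \<in># P \<Longrightarrow> r \<ge> 0" and c: "count P 0 \<ge> 2"
  shows "sorted_list_of_multiset P ! 1 = 0"
proof -
  define s where "s = sorted_list_of_multiset P"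
  have ms: "mset s = P" and so: "sorted s" unfolding s_def by auto
  have "s \<noteq> []" using c ms by auto
  then obtain a t where st: "s = a # t" by (cases s) auto
  have cnt: "count P 0 = count (mset t) 0 + (if a = 0 then 1 else 0)" using ms st by auto
  have "count P 0 \<le> count (mset t) 0 + 1" unfolding cnt by simp
  then have "count (mset t) 0 > 0" using c by linarith
  then have "0 \<in># mset t" using count_greater_zero_iff by metis
  then have "0 \<in> set t" by simp
  then obtain b t' where tt: "t = b # t'" by (cases t) auto
  have "b \<le> 0" using so st tt \<open>0 \<in> set t\<close> by auto
  moreover have "b \<ge> 0" using nn ms st tt by auto
  ultimately show ?thesis unfolding s_def[symmetric] using st tt by simp
qed


lemma psd_zero_kernel:
  fixes L :: "real mat"
  assumes sym: "\<And>i j. i<N \<Longrightarrow> j<N \<Longrightarrow> L$$(i,j) = L$$(j,i)"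
    and psd: "\<And>x. (\<Sum>i<N. \<Sum>j<N. x i * L$$(i,j) * x j) \<ge> 0"
    and q0: "(\<Sum>i<N. \<Sum>j<N. x i * L$$(i,j) * x j) = 0"
    and r: "r < N"
  shows "(\<Sum>j<N. L$$(r,j) * x j) = 0"
proof (rule ccontr)
  define a where "a = (\<Sum>j<N. L$$(r,j) * x j)"
  define b where "b = L$$(r,r)"
  assume "(\<Sum>j<N. L$$(r,j) * x j) \<noteq> 0"
  then have a0: "a \<noteq> 0" unfolding a_def .
  define d where "d = (\<lambda>k. if k = r then 1 else (0::real))"
  have "(\<Sum>i<N. \<Sum>j<N. d i * L$$(i,j) * d j) = (\<Sum>i<N. if i = r then (\<Sum>j<N. L$$(i,j) * d j) else 0)"
    by (intro sum.cong refl) (simp add: d_def)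
  also have "\<dots> = (\<Sum>j<N. L$$(r,j) * d j)" using r by simp
  also have "\<dots> = (\<Sum>j<N. if j = r then L$$(r,j) else 0)" by (intro sum.cong refl) (simp add: d_def)
  also have "\<dots> = b" using r by (simp add: b_def)
  finally have qd: "(\<Sum>i<N. \<Sum>j<N. d i * L$$(i,j) * d j) = b" .
  have b0: "b \<ge> 0" using psd[of d] qd by simp
  have dx: "(\<Sum>i<N. \<Sum>j<N. d i * L$$(i,j) * x j) = a"
  proof -
    have "(\<Sum>i<N. \<Sum>j<N. d i * L$$(i,j) * x j) = (\<Sum>i<N. if i = r then (\<Sum>j<N. L$$(i,j) * x j) else 0)"
      by (intro sum.cong refl) (simp add: d_def)
    also have "\<dots> = a" using r by (simp add: a_def)
    finally show ?thesis .
  qed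
  have xd: "(\<Sum>i<N. \<Sum>j<N. x i * L$$(i,j) * d j) = a"
  proof -
    have "(\<Sum>i<N. \<Sum>j<N. x i * L$$(i,j) * d j) = (\<Sum>i<N. x i * L$$(i,r))"
    proof (intro sum.cong refl)
      fix i assume i: "i \<in> {..<N}"
      have "(\<Sum>j<N. x i * L$$(i,j) * d j) = (\<Sum>j<N. if j = r then x i * L$$(i,j) else 0)"
        by (intro sum.cong refl) (simp add: d_def)
      also have "\<dots> = x i * L$$(i,r)" using r by simp
      finally show "(\<Sum>j<N. x i * L$$(i,j) * d j) = x i * L$$(i,r)" .
    qed
    also have "\<dots> = (\<Sum>i<N. L$$(r,i) * x i)" using r sym by (intro sum.cong refl) (simp add: mult.commute)
    also have "\<dots> = a" unfolding a_def ..
    finally show ?thesis .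
  qed
  have expand: "\<And>t. (\<Sum>i<N. \<Sum>j<N. (x i + t * d i) * L$$(i,j) * (x j + t * d j)) = 2 * t * a + t^2 * b"
  proof -
    fix t :: real
    have "(\<Sum>i<N. \<Sum>j<N. (x i + t * d i) * L$$(i,j) * (x j + t * d j))
      = (\<Sum>i<N. \<Sum>j<N. x i * L$$(i,j) * x j + t * (d i * L$$(i,j) * x j)
        + t * (x i * L$$(i,j) * d j) + t^2 * (d i * L$$(i,j) * d j))"
      by (intro sum.cong refl) (simp add: algebra_simps power2_eq_square)
    also have "\<dots> = (\<Sum>i<N. \<Sum>j<N. x i * L$$(i,j) * x j) + t * (\<Sum>i<N. \<Sum>j<N. d i * L$$(i,j) * x j)
        + t * (\<Sum>i<N. \<Sum>j<N. x i * L$$(i,j) * d j) + t^2 * (\<Sum>i<N. \<Sum>j<N. d i * L$$(i,j) * d j)"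
      by (simp only: sum.distrib sum_distrib_left[symmetric])
    finally show "(\<Sum>i<N. \<Sum>j<N. (x i + t * d i) * L$$(i,j) * (x j + t * d j)) = 2 * t * a + t^2 * b"
      using q0 qd dx xd by simp
  qed
  define t where "t = - a / (b + 1)"
  have nn: "0 \<le> 2 * t * a + t^2 * b" using psd[of "\<lambda>k. x k + t * d k"] expand[of t] by simp
  have eq: "(b+1)^2 * (2 * t * a + t^2 * b) = (-(a^2)) * (b + 2)"
  proof -
    have tb: "t * (b+1) = -a" using b0 unfolding t_def by simp
    have "(b+1)^2 * (2 * t * a + t^2 * b) = 2*a*(b+1)*(t*(b+1)) + (t*(b+1))^2*b"
      by (simp add: algebra_simps power2_eq_square)
    also have "\<dots> = (-(a^2)) * (b + 2)" unfolding tb by (simp add: algebra_simps power2_eq_square)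
    finally show ?thesis .
  qed
  have neg: "(-(a^2)) * (b + 2) < 0" using a0 b0 by (simp add: mult_pos_pos)
  have "(b+1)^2 * (2 * t * a + t^2 * b) \<ge> 0" using nn by simp
  then show False using eq neg by linarith
qed


lemma mult_mat_vec_entry:
  assumes "L \<in> carrier_mat n n" "v \<in> carrier_vec n" "r < n"
  shows "(L *\<^sub>v v) $ r = (\<Sum>j<n. L $$ (r,j) * v $ j)"
  using assms by (simp add: scalar_prod_def row_def lessThan_atLeast0)

lemma perp_pos:
  fixes L :: "real mat" and x :: "nat \<Rightarrow> real"
  assumes L: "L \<in> carrier_mat N N" and N2: "N \<ge> 2"
    and sym: "\<And>i j. i<N \<Longrightarrow> j<N \<Longrightarrow> L$$(i,j) = L$$(j,i)"
    and rows: "\<And>i. i < N \<Longrightarrow> (\<Sum>j<N. L $$ (i,j)) = 0"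
    and psd: "\<And>x. (\<Sum>i<N. \<Sum>j<N. x i * L$$(i,j) * x j) \<ge> 0"
    and lam: "lambda2 L > 0"
    and xs: "(\<Sum>k<N. x k) = 0" and k0: "k0 < N" "x k0 \<noteq> 0"
  shows "(\<Sum>i<N. \<Sum>j<N. x i * L$$(i,j) * x j) > 0"
proof (rule ccontr)
  assume "\<not> ?thesis"
  then have q0: "(\<Sum>i<N. \<Sum>j<N. x i * L$$(i,j) * x j) = 0" using psd[of x] by linarith
  have kern: "\<And>r. r < N \<Longrightarrow> (\<Sum>j<N. L$$(r,j) * x j) = 0"
    using psd_zero_kernel[OF sym psd q0] by blast
  define p where "p = char_poly L"
  have degp: "degree p = N" unfolding p_def using degree_monic_char_poly[OF L] by simp
  have p0: "p \<noteq> 0" using degp N2 by auto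
  have pd0: "pderiv p \<noteq> 0" using degp N2 by (simp add: pderiv_eq_0_iff)
  have root0: "poly p 0 = 0"
  proof -
    let ?o = "Matrix.vec N (\<lambda>_. 1::real)"
    have "eigenvector L ?o 0"
      unfolding eigenvector_def
    proof (intro conjI)
      show "?o \<in> carrier_vec (dim_row L)" using L by simp
      show "?o \<noteq> 0\<^sub>v (dim_row L)"
      proof
        assume "?o = 0\<^sub>v (dim_row L)"
        then have "?o $ 0 = 0\<^sub>v (dim_row L) $ 0" by simp
        then show False using L N2 by simp
      qed
      show "L *\<^sub>v ?o = 0 \<cdot>\<^sub>v ?o"
      proof (rule eq_vecI)
        fix r assume "r < dim_vec (0 \<cdot>\<^sub>v ?o)"
        then have r: "r < N" by simp
        have "(L *\<^sub>v ?o) $ r = (\<Sum>j<N. L $$ (r,j) * 1)" by (rule mult_mat_vec_vec_entry[OF L r])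
        then show "(L *\<^sub>v ?o) $ r = (0 \<cdot>\<^sub>v ?o) $ r" using rows[OF r] r by simp
      qed (use L in simp)
    qed
    then have "eigenvalue L 0" unfolding eigenvalue_def by blast
    then show ?thesis unfolding p_def using eigenvalue_root_char_poly[OF L] by simp
  qed
  have minor: "\<And>i. i < N \<Longrightarrow> poly (char_poly (mat_delete L i i)) 0 = 0"
  proof -
    fix i assume i: "i < N"
    let ?s = "\<lambda>j. if j < i then j else Suc j"
    define v where "v = (\<lambda>k. x k - x i)"
    have "\<exists>k<N. x k \<noteq> x i"
    proof (rule ccontr)
      assume "\<not> ?thesis"
      then have c: "\<And>k. k < N \<Longrightarrow> x k = x i" by auto
      then have "(\<Sum>k<N. x k) = real N * x i" by simp
      then have "x i = 0" using xs N2 by simp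
      then show False using c[OF k0(1)] k0 by simp
    qed
    then obtain k where k: "k < N" "v k \<noteq> 0" unfolding v_def by auto
    have ki: "k \<noteq> i" using k unfolding v_def by auto
    define A where "A = mat_delete L i i"
    have A: "A \<in> carrier_mat (N-1) (N-1)" unfolding A_def using mat_delete_carrier[OF L] .
    define w where "w = Matrix.vec (N-1) (\<lambda>j. v (?s j))"
    have "eigenvector A w 0"
      unfolding eigenvector_def
    proof (intro conjI)
      show "w \<in> carrier_vec (dim_row A)" using A unfolding w_def by simp
      show "w \<noteq> 0\<^sub>v (dim_row A)"
      proof
        define j where "j = (if k < i then k else k - 1)"
        have j: "j < N - 1" "?s j = k" using k ki i unfolding j_def by auto
        assume "w = 0\<^sub>v (dim_row A)"
        then have "w $ j = 0\<^sub>v (dim_row A) $ j" by simp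
        then show False using A j k unfolding w_def by simp
      qed
      show "A *\<^sub>v w = 0 \<cdot>\<^sub>v w"
      proof (rule eq_vecI)
        show "dim_vec (A *\<^sub>v w) = dim_vec (0 \<cdot>\<^sub>v w)" using A unfolding w_def by simp
        fix r assume "r < dim_vec (0 \<cdot>\<^sub>v w)"
        then have r: "r < N - 1" unfolding w_def by simp
        then have sr: "?s r < N" by auto
        have "(A *\<^sub>v w) $ r = (\<Sum>j<N-1. A $$ (r,j) * v (?s j))"
          unfolding w_def by (rule mult_mat_vec_vec_entry[OF A r])
        also have "\<dots> = (\<Sum>j<N-1. L $$ (?s r, ?s j) * v (?s j))"
          using r L by (intro sum.cong refl) (simp add: A_def mat_delete_def)
        also have "\<dots> = (\<Sum>j<N. L $$ (?s r, j) * v j) - L $$ (?s r, i) * v i"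
          by (rule sum_skip[OF i, of "\<lambda>j. L $$ (?s r, j) * v j"])
        also have "\<dots> = (\<Sum>j<N. L $$ (?s r, j) * x j) - x i * (\<Sum>j<N. L $$ (?s r, j))"
          unfolding v_def by (simp add: algebra_simps sum_subtractf sum_distrib_left)
        also have "\<dots> = 0" using kern[OF sr] rows[OF sr] by simp
        finally show "(A *\<^sub>v w) $ r = (0 \<cdot>\<^sub>v w) $ r" using r unfolding w_def by simp
      qed
    qed
    then have "eigenvalue A 0" unfolding eigenvalue_def by blast
    then show "poly (char_poly (mat_delete L i i)) 0 = 0"
      using eigenvalue_root_char_poly[OF A] unfolding A_def by simp
  qed
  have "poly (pderiv p) 0 = (\<Sum>i<N. poly (char_poly (mat_delete L i i)) 0)"
    unfolding p_def pderiv_char_poly[OF L] poly_sum ..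
  also have "\<dots> = 0" using minor by simp
  finally have root1: "poly (pderiv p) 0 = 0" .
  have "order 0 p = Suc (order 0 (pderiv p))" using order_pderiv[OF p0 root0] .
  moreover have "order 0 (pderiv p) \<noteq> 0" using root1 pd0 order_root by blast
  ultimately have cnt: "count (proots p) 0 \<ge> 2" using count_proots[OF p0] by simp
  have nn: "\<And>r. r \<in># proots p \<Longrightarrow> r \<ge> 0"
  proof -
    fix r assume "r \<in># proots p"
    then have "count (proots p) r > 0" by simp
    then have "order r p \<noteq> 0" using count_proots[OF p0] by simp
    then have "poly p r = 0" using order_root by blast
    then have "eigenvalue L r" unfolding p_def using eigenvalue_root_char_poly[OF L] by simp
    then obtain v where ev: "eigenvector L v r" unfolding eigenvalue_def by blast
    then have v: "v \<in> carrier_vec N" "v \<noteq> 0\<^sub>v N" "L *\<^sub>v v = r \<cdot>\<^sub>v v"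
      using L unfolding eigenvector_def by auto
    define y where "y = (\<lambda>k. v $ k)"
    have row: "\<And>s. s < N \<Longrightarrow> (\<Sum>j<N. L $$ (s,j) * y j) = r * y s"
    proof -
      fix s assume s: "s < N"
      have "(\<Sum>j<N. L $$ (s,j) * y j) = (L *\<^sub>v v) $ s"
        unfolding y_def using mult_mat_vec_entry[OF L v(1) s] by simp
      also have "\<dots> = r * y s" unfolding v(3) y_def using v(1) s by simp
      finally show "(\<Sum>j<N. L $$ (s,j) * y j) = r * y s" .
    qed
    have "(\<Sum>i<N. \<Sum>j<N. y i * L$$(i,j) * y j) = (\<Sum>i<N. y i * (\<Sum>j<N. L$$(i,j) * y j))"
      by (simp add: sum_distrib_left mult.assoc)
    also have "\<dots> = r * (\<Sum>i<N. (y i)^2)"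
      using row by (simp add: sum_distrib_left power2_eq_square algebra_simps)
    finally have qy: "r * (\<Sum>i<N. (y i)^2) \<ge> 0" using psd[of y] by simp
    obtain s where s: "s < N" "v $ s \<noteq> 0"
    proof -
      have "\<exists>s<N. v $ s \<noteq> 0"
      proof (rule ccontr)
        assume "\<not> ?thesis"
        then have "v = 0\<^sub>v N" using v(1) by (intro eq_vecI) auto
        then show False using v(2) by simp
      qed
      then show ?thesis using that by blast
    qed
    have "(\<Sum>i<N. (y i)^2) > 0"
    proof (rule sum_pos2[of _ s])
      show "s \<in> {..<N}" using s by simp
      show "0 < (y s)^2" using s unfolding y_def by simp
    qed auto
    then show "r \<ge> 0" using qy by (simp add: zero_le_mult_iff)
  qed
  have "lambda2 L = 0"
    unfolding lambda2_def sorted_eigenvalues_def p_def[symmetric]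
    by (rule sorted_second_zero[OF nn cnt])
  then show False using lam by simp
qed


lemma coord_cont [continuous_intros]: "continuous_on S (\<lambda>x::nat\<Rightarrow>real. x k)"
  by (rule continuous_on_subset[OF continuous_on_product_coordinates]) auto

lemma quad_shift:
  fixes L :: "real mat" and x :: "nat \<Rightarrow> real"
  assumes sym: "\<And>i j. i<N \<Longrightarrow> j<N \<Longrightarrow> L$$(i,j) = L$$(j,i)"
    and rows: "\<And>i. i < N \<Longrightarrow> (\<Sum>j<N. L $$ (i,j)) = 0"
  shows "(\<Sum>i<N. \<Sum>j<N. (x i - m) * L$$(i,j) * (x j - m)) = (\<Sum>i<N. \<Sum>j<N. x i * L$$(i,j) * x j)"
proof -
  have cols: "\<And>j. j < N \<Longrightarrow> (\<Sum>i<N. L $$ (i,j)) = 0"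
  proof -
    fix j assume j: "j < N"
    have "(\<Sum>i<N. L $$ (i,j)) = (\<Sum>i<N. L $$ (j,i))" using sym j by (intro sum.cong refl) auto
    then show "(\<Sum>i<N. L $$ (i,j)) = 0" using rows[OF j] by simp
  qed
  have step: "\<And>i. i < N \<Longrightarrow> (\<Sum>j<N. (x i - m) * L$$(i,j) * (x j - m))
      = (\<Sum>j<N. x i * L$$(i,j) * x j) - m * (\<Sum>j<N. L$$(i,j) * x j)"
  proof -
    fix i assume i: "i < N"
    have "(\<Sum>j<N. (x i - m) * L$$(i,j) * (x j - m))
      = (\<Sum>j<N. x i * L$$(i,j) * x j - m * (L$$(i,j) * x j) - (x i - m) * m * L$$(i,j))"
      by (intro sum.cong refl) (simp add: algebra_simps)
    also have "\<dots> = (\<Sum>j<N. x i * L$$(i,j) * x j) - m * (\<Sum>j<N. L$$(i,j) * x j) - (x i - m) * m * (\<Sum>j<N. L$$(i,j))"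
      by (simp only: sum_subtractf sum_distrib_left[symmetric])
    finally show "?thesis i" using rows[OF i] by simp
  qed
  have z: "(\<Sum>i<N. \<Sum>j<N. L$$(i,j) * x j) = 0"
  proof -
    have "(\<Sum>i<N. \<Sum>j<N. L$$(i,j) * x j) = (\<Sum>j<N. \<Sum>i<N. L$$(i,j) * x j)" by (rule sum.swap)
    also have "\<dots> = (\<Sum>j<N. (\<Sum>i<N. L$$(i,j)) * x j)" by (simp only: sum_distrib_right)
    also have "\<dots> = 0" using cols by simp
    finally show ?thesis .
  qed
  have "(\<Sum>i<N. \<Sum>j<N. (x i - m) * L$$(i,j) * (x j - m))
     = (\<Sum>i<N. (\<Sum>j<N. x i * L$$(i,j) * x j) - m * (\<Sum>j<N. L$$(i,j) * x j))"
    using step by (intro sum.cong refl) auto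
  also have "\<dots> = (\<Sum>i<N. \<Sum>j<N. x i * L$$(i,j) * x j) - m * (\<Sum>i<N. \<Sum>j<N. L$$(i,j) * x j)"
    by (simp only: sum_subtractf sum_distrib_left[symmetric])
  finally show ?thesis using z by simp
qed

lemma spectral_gap:
  fixes L :: "real mat"
  assumes L: "L \<in> carrier_mat N N" and N2: "N \<ge> 2"
    and sym: "\<And>i j. i<N \<Longrightarrow> j<N \<Longrightarrow> L$$(i,j) = L$$(j,i)"
    and rows: "\<And>i. i < N \<Longrightarrow> (\<Sum>j<N. L $$ (i,j)) = 0"
    and psd: "\<And>x. (\<Sum>i<N. \<Sum>j<N. x i * L$$(i,j) * x j) \<ge> 0"
    and lam: "lambda2 L > 0"
  shows "\<exists>l>0. \<forall>x. (\<Sum>i<N. \<Sum>j<N. x i * L$$(i,j) * x j) \<ge> l * (\<Sum>k<N. (x k - (\<Sum>m<N. x m) / N)^2)"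
proof -
  define q where "q = (\<lambda>x::nat\<Rightarrow>real. \<Sum>i<N. \<Sum>j<N. x i * L$$(i,j) * x j)"
  define S where "S = {x::nat\<Rightarrow>real. (\<forall>k. N \<le> k \<longrightarrow> x k = 0) \<and> (\<Sum>k<N. x k) = 0 \<and> (\<Sum>k<N. (x k)^2) = 2}"
  define B where "B = PiE UNIV (\<lambda>k. if k < N then {-2..2} else {0::real})"
  have "compactin (product_topology (\<lambda>_. euclidean) UNIV) B"
    unfolding B_def by (subst compactin_PiE) (auto simp: compactin_euclidean_iff)
  then have cB: "compact B" by (simp add: euclidean_product_topology compactin_euclidean_iff)
  have clS: "closed S"
  proof -
    have "S = (\<Inter>k\<in>{N..}. {x. x k = 0}) \<inter> {x. (\<Sum>k<N. x k) = 0} \<inter> {x. (\<Sum>k<N. (x k)^2) = 2}"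
      unfolding S_def by auto
    moreover have "closed (\<Inter>k\<in>{N..}. {x::nat\<Rightarrow>real. x k = 0})"
      by (intro closed_INT ballI closed_Collect_eq continuous_intros)
    moreover have "closed {x::nat\<Rightarrow>real. (\<Sum>k<N. x k) = 0}"
      by (intro closed_Collect_eq continuous_intros)
    moreover have "closed {x::nat\<Rightarrow>real. (\<Sum>k<N. (x k)^2) = 2}"
      by (intro closed_Collect_eq continuous_intros)
    ultimately show ?thesis by auto
  qed
  have SB: "S \<subseteq> B"
  proof
    fix x assume x: "x \<in> S"
    have "\<And>k. k < N \<Longrightarrow> x k \<in> {-2..2}"
    proof -
      fix k assume k: "k < N"
      have "(x k)^2 \<le> (\<Sum>m<N. (x m)^2)"
        using k by (intro member_le_sum) auto
      then have "(x k)^2 \<le> 2^2" using x unfolding S_def by simp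
      then have "\<bar>x k\<bar> \<le> \<bar>2\<bar>" using abs_le_square_iff[of "x k" 2] by blast
      then show "x k \<in> {-2..2}" by auto
    qed
    then show "x \<in> B" using x unfolding S_def B_def by auto
  qed
  have cS: "compact S" using compact_Int_closed[OF cB clS] SB by (simp add: Int_absorb1)
  define x0 where "x0 = (\<lambda>k::nat. if k = 0 then 1 else if k = 1 then -1 else (0::real))"
  have x0S: "x0 \<in> S"
  proof -
    have "(\<Sum>k<N. x0 k) = (\<Sum>k\<in>{0,1}. x0 k)"
      by (rule sum.mono_neutral_right) (use N2 in \<open>auto simp: x0_def\<close>)
    moreover have "(\<Sum>k<N. (x0 k)^2) = (\<Sum>k\<in>{0,1}. (x0 k)^2)"
      by (rule sum.mono_neutral_right) (use N2 in \<open>auto simp: x0_def\<close>)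
    ultimately show ?thesis unfolding S_def using N2 by (auto simp: x0_def)
  qed
  have cq: "continuous_on S q" unfolding q_def by (intro continuous_intros)
  have "compact (q ` S)" by (rule compact_continuous_image[OF cq cS])
  moreover have "q ` S \<noteq> {}" using x0S by auto
  ultimately obtain m where m: "m \<in> q ` S" "\<And>t. t \<in> q ` S \<Longrightarrow> m \<le> t"
    using compact_attains_inf by metis
  then obtain s0 where s0: "s0 \<in> S" "m = q s0" by auto
  have "\<exists>k<N. s0 k \<noteq> 0"
  proof (rule ccontr)
    assume "\<not> ?thesis"
    then have "(\<Sum>k<N. (s0 k)^2) = 0" by simp
    then show False using s0 unfolding S_def by simp
  qed
  then obtain k0 where k0: "k0 < N" "s0 k0 \<noteq> 0" by auto
  have mpos: "m > 0" unfolding s0(2) q_def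
  proof (rule perp_pos[where x = s0])
    show "(\<Sum>k<N. s0 k) = 0" using s0 by (simp add: S_def)
  qed (use L N2 sym rows psd lam k0 in auto)
  show ?thesis
  proof (intro exI[of _ "m/2"] conjI allI)
    show "m/2 > 0" using mpos by simp
    fix x :: "nat \<Rightarrow> real"
    define mu where "mu = (\<Sum>l<N. x l) / N"
    define w where "w = (\<lambda>k. if k < N then x k - mu else 0)"
    define nw where "nw = (\<Sum>k<N. (w k)^2)"
    have qxw: "q x = q w"
    proof -
      have "q w = (\<Sum>i<N. \<Sum>j<N. (x i - mu) * L$$(i,j) * (x j - mu))"
        unfolding q_def w_def by (intro sum.cong refl) auto
      then show ?thesis unfolding q_def using quad_shift[OF sym rows] by simp
    qed
    have rhs: "(\<Sum>k<N. (x k - (\<Sum>m<N. x m) / N)^2) = nw"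
      unfolding nw_def w_def mu_def by (intro sum.cong refl) auto
    have wsum: "(\<Sum>k<N. w k) = 0"
    proof -
      have "(\<Sum>k<N. w k) = (\<Sum>k<N. x k) - N * mu" unfolding w_def by (simp add: sum_subtractf)
      then show ?thesis unfolding mu_def using N2 by simp
    qed
    have "q x \<ge> m/2 * nw"
    proof (cases "nw = 0")
      case True then show "q x \<ge> m/2 * nw" using psd[of x] unfolding q_def by simp
    next
      case False
      have nwp: "nw > 0" using False unfolding nw_def by (simp add: order_le_neq_trans sum_nonneg)
      define c where "c = sqrt (2 / nw)"
      have c2: "c^2 = 2 / nw" unfolding c_def using nwp by simp
      define u where "u = (\<lambda>k. c * w k)"
      have uS: "u \<in> S" unfolding S_def
      proof (intro CollectI conjI allI impI)
        show "\<And>k. N \<le> k \<Longrightarrow> u k = 0" unfolding u_def w_def by simp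
        show "(\<Sum>k<N. u k) = 0" unfolding u_def using wsum by (simp add: sum_distrib_left[symmetric])
        have "(\<Sum>k<N. (u k)^2) = c^2 * nw" unfolding u_def nw_def
          by (simp add: sum_distrib_left power_mult_distrib)
        then show "(\<Sum>k<N. (u k)^2) = 2" using c2 nwp by simp
      qed
      have "q u = c^2 * q w" unfolding q_def u_def
        by (simp add: sum_distrib_left power2_eq_square algebra_simps)
      moreover have "m \<le> q u" using m(2) uS by auto
      ultimately have "m \<le> 2 / nw * q w" using c2 by simp
      then have "m * nw \<le> 2 * q w" using nwp by (simp add: field_simps)
      then show "q x \<ge> m/2 * nw" using qxw by simp
    qed
    then show "(\<Sum>i<N. \<Sum>j<N. x i * L$$(i,j) * x j) \<ge> m/2 * (\<Sum>k<N. (x k - (\<Sum>m<N. x m) / N)^2)"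
      unfolding rhs q_def by simp
  qed
qed


lemma divmod_block [simp]:
  fixes M :: nat
  assumes "c < M"
  shows "(k*M+c) div M = k" "(k*M+c) mod M = c"
  using assms by auto

lemma dbm_entry:
  assumes "\<forall>A\<in>set Ds. A \<in> carrier_mat M M" "i < length Ds * M" "j < length Ds * M"
  shows "diag_block_mat Ds $$ (i,j) = (if i div M = j div M then (Ds ! (i div M)) $$ (i mod M, j mod M) else 0)"
  using assms
proof (induction Ds arbitrary: i j)
  case Nil then show ?case by simp
next
  case (Cons A Ds)
  let ?D = "diag_block_mat Ds"
  have A: "A \<in> carrier_mat M M" using Cons.prems by simp
  have Dd: "dim_row ?D = length Ds * M" "dim_col ?D = length Ds * M"
    using Cons.prems(1) unfolding dim_diag_block_mat by (induction Ds) auto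
  have M0: "M > 0" using Cons.prems(2) by (cases M) auto
  have e: "diag_block_mat (A # Ds) $$ (i,j) = (if i < M then if j < M then A $$ (i, j)
           else 0 else if j < M then 0 else ?D $$ (i - M, j - M))"
    using Cons.prems A Dd by (simp add: Let_def)
  show ?case
  proof (cases "i < M")
    case True
    then show ?thesis
    proof (cases "j < M")
      case True then show ?thesis using e \<open>i < M\<close> by simp
    next
      case False then have "j div M \<noteq> 0" using le_div_geq[OF M0, of j] by auto
      then show ?thesis using e \<open>i < M\<close> False by simp
    qed
  next
    case False
    note iM = False
    show ?thesis
    proof (cases "j < M")
      case True then have "i div M \<noteq> 0" using le_div_geq[OF M0, of i] iM by auto
      then show ?thesis using e iM True by simp
    next
      case False
      have i': "i - M < length Ds * M" "j - M < length Ds * M" using Cons.prems iM False by auto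
      have IH: "?D $$ (i - M, j - M) = (if (i-M) div M = (j-M) div M then (Ds ! ((i-M) div M)) $$ ((i-M) mod M, (j-M) mod M) else 0)"
        using Cons.IH[OF _ i'] Cons.prems(1) by simp
      have di: "i div M = Suc ((i-M) div M)" "j div M = Suc ((j-M) div M)"
        using iM False M0 by (simp_all add: le_div_geq)
      have mi: "i mod M = (i-M) mod M" "j mod M = (j-M) mod M"
        using iM False by (simp_all add: le_mod_geq)
      show ?thesis using e iM False IH di mi by simp
    qed
  qed
qed

lemma dbm_dims:
  assumes "\<And>k. k \<in> set xs \<Longrightarrow> F k \<in> carrier_mat (r k) (c k)"
  shows "diag_block_mat (map F xs) \<in> carrier_mat (sum_list (map r xs)) (sum_list (map c xs))"
  using assms unfolding carrier_mat_def dim_diag_block_mat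
  by (induction xs) auto

lemma dbm_mult:
  assumes "\<And>k. k \<in> set xs \<Longrightarrow> K k \<in> carrier_mat M (Md k) \<and> H k \<in> carrier_mat (Md k) M"
  shows "diag_block_mat (map K xs) * diag_block_mat (map H xs) = diag_block_mat (map (\<lambda>k. K k * H k) xs)"
  using assms
proof (induction xs)
  case Nil then show ?case by (auto intro!: eq_matI)
next
  case (Cons a xs)
  let ?DK = "diag_block_mat (map K xs)"
  let ?DH = "diag_block_mat (map H xs)"
  let ?DKH = "diag_block_mat (map (\<lambda>k. K k * H k) xs)"
  have Ka: "K a \<in> carrier_mat M (Md a)" and Ha: "H a \<in> carrier_mat (Md a) M" using Cons.prems by auto
  have DK: "?DK \<in> carrier_mat (sum_list (map (\<lambda>_. M) xs)) (sum_list (map Md xs))"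
    by (rule dbm_dims) (use Cons.prems in auto)
  have DH: "?DH \<in> carrier_mat (sum_list (map Md xs)) (sum_list (map (\<lambda>_. M) xs))"
    by (rule dbm_dims) (use Cons.prems in auto)
  have DKH: "?DKH \<in> carrier_mat (sum_list (map (\<lambda>_. M) xs)) (sum_list (map (\<lambda>_. M) xs))"
    by (rule dbm_dims) (meson Cons.prems list.set_intros(2) mult_carrier_mat)
  have IH: "?DK * ?DH = ?DKH" using Cons by auto
  define s where "s = sum_list (map Md xs)"
  define t where "t = sum_list (map (\<lambda>_. M) xs)"
  note DK' = DK[folded s_def t_def] and DH' = DH[folded s_def t_def] and DKH' = DKH[folded s_def t_def]
  have "diag_block_mat (map K (a # xs)) * diag_block_mat (map H (a # xs))
    = four_block_mat (K a) (0\<^sub>m M s) (0\<^sub>m t (Md a)) ?DK * four_block_mat (H a) (0\<^sub>m (Md a) t) (0\<^sub>m s M) ?DH"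
    using Ka Ha DK' DH' by (simp add: Let_def)
  also have "\<dots> = four_block_mat (K a * H a + 0\<^sub>m M s * 0\<^sub>m s M) (K a * 0\<^sub>m (Md a) t + 0\<^sub>m M s * ?DH)
     (0\<^sub>m t (Md a) * H a + ?DK * 0\<^sub>m s M) (0\<^sub>m t (Md a) * 0\<^sub>m (Md a) t + ?DK * ?DH)"
    by (rule mult_four_block_mat[OF Ka _ _ DK' Ha _ _ DH']) auto
  also have "\<dots> = four_block_mat (K a * H a) (0\<^sub>m M t) (0\<^sub>m t M) ?DKH"
    using Ka Ha DK' DH' IH DKH' by (simp add: Let_def)
  also have "\<dots> = diag_block_mat (map (\<lambda>k. K k * H k) (a # xs))"
    using Ka Ha DKH' by (simp add: Let_def)
  finally show ?case .
qed

lemma kron_entry: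
  assumes "A \<in> carrier_mat N N" "i < N*M" "j < N*M"
  shows "kron A (1\<^sub>m M) $$ (i,j) = A $$ (i div M, j div M) * (if i mod M = j mod M then 1 else 0)"
proof -
  have M0: "M > 0" using assms by (cases M) auto
  then show ?thesis using assms unfolding kron_def by simp
qed

lemma qf_entries:
  assumes "X \<in> carrier_mat n n" "z \<in> carrier_vec n"
  shows "scalar_prod z (X *\<^sub>v z) = (\<Sum>i<n. \<Sum>j<n. z$i * X$$(i,j) * z$j)"
proof -
  have "scalar_prod z (X *\<^sub>v z) = (\<Sum>i<n. z$i * (X *\<^sub>v z)$i)"
    using assms by (simp add: scalar_prod_def lessThan_atLeast0)
  also have "\<dots> = (\<Sum>i<n. z$i * (\<Sum>j<n. X$$(i,j) * z$j))"
    using assms mult_mat_vec_entry[OF assms] by (intro sum.cong refl) auto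
  also have "\<dots> = (\<Sum>i<n. \<Sum>j<n. z$i * X$$(i,j) * z$j)"
    by (simp add: sum_distrib_left mult.assoc)
  finally show ?thesis .
qed

lemma sum_split_blocks2:
  fixes g :: "nat \<Rightarrow> nat \<Rightarrow> 'a::comm_monoid_add"
  shows "(\<Sum>i<N*M. \<Sum>j<N*M. g i j) = (\<Sum>k<N. \<Sum>c<M. \<Sum>l<N. \<Sum>d<M. g (k*M+c) (l*M+d))"
  by (simp add: sum_split_blocks[of _ N M])


lemma cs_sum:
  fixes f g :: "nat \<Rightarrow> real"
  assumes "finite A"
  shows "(\<Sum>i\<in>A. f i * g i)^2 \<le> (\<Sum>i\<in>A. (f i)^2) * (\<Sum>i\<in>A. (g i)^2)"
proof -
  have "\<bar>\<Sum>i\<in>A. f i * g i\<bar> \<le> (\<Sum>i\<in>A. \<bar>f i\<bar> * \<bar>g i\<bar>)"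
    by (rule order_trans[OF sum_abs]) (simp add: abs_mult)
  also have "\<dots> \<le> L2_set f A * L2_set g A" by (rule L2_set_mult_ineq)
  finally have h: "\<bar>\<Sum>i\<in>A. f i * g i\<bar> \<le> L2_set f A * L2_set g A" .
  have "(\<Sum>i\<in>A. f i * g i)^2 = \<bar>\<Sum>i\<in>A. f i * g i\<bar>^2" by simp
  also have "\<dots> \<le> (L2_set f A * L2_set g A)^2"
    by (rule power_mono[OF h]) simp
  also have "\<dots> = (\<Sum>i\<in>A. (f i)^2) * (\<Sum>i\<in>A. (g i)^2)"
    unfolding L2_set_def power_mult_distrib by (simp add: sum_nonneg)
  finally show ?thesis .
qed

lemma vnorm_sq:
  assumes "z \<in> carrier_vec n"
  shows "(vnorm z)^2 = (\<Sum>i<n. (z$i)^2)" and "vnorm z \<ge> 0"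
proof -
  have e: "scalar_prod z z = (\<Sum>i<n. (z$i)^2)"
    using assms by (simp add: scalar_prod_def lessThan_atLeast0 power2_eq_square)
  have nn: "scalar_prod z z \<ge> 0" unfolding e by (simp add: sum_nonneg)
  then show "(vnorm z)^2 = (\<Sum>i<n. (z$i)^2)" unfolding vnorm_def using e by simp
  show "vnorm z \<ge> 0" unfolding vnorm_def using nn by simp
qed

lemma scalar_cs:
  assumes "v \<in> carrier_vec n" "w \<in> carrier_vec n"
  shows "\<bar>scalar_prod v w\<bar> \<le> vnorm v * vnorm w"
proof -
  have e: "scalar_prod v w = (\<Sum>i<n. v$i * w$i)"
    using assms by (simp add: scalar_prod_def lessThan_atLeast0)
  have "\<bar>scalar_prod v w\<bar>^2 \<le> (vnorm v * vnorm w)^2"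
    unfolding e power_mult_distrib vnorm_sq[OF assms(1)] vnorm_sq[OF assms(2)]
    using cs_sum[of "{..<n}" "\<lambda>i. v$i" "\<lambda>i. w$i"] by simp
  then show ?thesis
    using vnorm_sq(2)[OF assms(1)] vnorm_sq(2)[OF assms(2)]
    by (meson abs_ge_zero mult_nonneg_nonneg power2_le_imp_le)
qed

lemma mat_vec_bound:
  assumes A: "A \<in> carrier_mat n m" and v: "v \<in> carrier_vec m"
  shows "vnorm (A *\<^sub>v v) \<le> sqrt (\<Sum>i<n. \<Sum>j<m. (A$$(i,j))^2) * vnorm v"
proof -
  have Av: "A *\<^sub>v v \<in> carrier_vec n" using A v by simp
  have ent: "\<And>i. i < n \<Longrightarrow> (A *\<^sub>v v) $ i = (\<Sum>j<m. A$$(i,j) * v$j)"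
    using A v by (simp add: scalar_prod_def row_def lessThan_atLeast0)
  have "(vnorm (A *\<^sub>v v))^2 = (\<Sum>i<n. ((A *\<^sub>v v) $ i)^2)" by (rule vnorm_sq[OF Av])
  also have "\<dots> \<le> (\<Sum>i<n. (\<Sum>j<m. (A$$(i,j))^2) * (\<Sum>j<m. (v$j)^2))"
    by (rule sum_mono) (simp add: ent cs_sum)
  also have "\<dots> = (\<Sum>i<n. \<Sum>j<m. (A$$(i,j))^2) * (vnorm v)^2"
    by (simp add: vnorm_sq[OF v] sum_distrib_right)
  also have "\<dots> = (sqrt (\<Sum>i<n. \<Sum>j<m. (A$$(i,j))^2) * vnorm v)^2"
    by (simp add: power_mult_distrib sum_nonneg)
  finally show ?thesis
    by (rule power2_le_imp_le) (simp add: vnorm_sq(2)[OF v] sum_nonneg)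
qed

lemma opnorm_bound:
  assumes A: "A \<in> carrier_mat n m" and v: "v \<in> carrier_vec m"
  shows "vnorm (A *\<^sub>v v) \<le> opnorm A * vnorm v"
proof -
  define C where "C = sqrt (\<Sum>i<n. \<Sum>j<m. (A$$(i,j))^2)"
  have C0: "C \<ge> 0" unfolding C_def by (simp add: sum_nonneg)
  define S where "S = {vnorm (A *\<^sub>v v) / vnorm v | v. v \<in> carrier_vec (dim_col A)}"
  have bdd: "bdd_above S"
  proof (rule bdd_aboveI)
    fix x assume "x \<in> S"
    then obtain w where w: "w \<in> carrier_vec m" "x = vnorm (A *\<^sub>v w) / vnorm w" using A unfolding S_def by auto
    show "x \<le> C"
    proof (cases "vnorm w = 0")
      case True then show ?thesis using w C0 by simp
    next
      case False
      then have "vnorm w > 0" using vnorm_sq(2)[OF w(1)] by simp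
      then show ?thesis using w mat_vec_bound[OF A w(1)] unfolding C_def[symmetric]
        by (simp add: divide_le_eq)
    qed
  qed
  show ?thesis
  proof (cases "vnorm v = 0")
    case True
    then have "vnorm (A *\<^sub>v v) \<le> 0" using mat_vec_bound[OF A v] by simp
    then show ?thesis using True by simp
  next
    case False
    then have vp: "vnorm v > 0" using vnorm_sq(2)[OF v] by simp
    have "vnorm (A *\<^sub>v v) / vnorm v \<in> S" unfolding S_def using v A by auto
    then have "vnorm (A *\<^sub>v v) / vnorm v \<le> opnorm A"
      unfolding opnorm_def S_def[symmetric] using bdd by (rule cSup_upper)
    then show ?thesis using vp by (simp add: divide_le_eq)
  qed
qed

lemma qf_opnorm:
  assumes A: "A \<in> carrier_mat n n" and z: "z \<in> carrier_vec n"
  shows "scalar_prod z (A *\<^sub>v z) \<ge> - (opnorm A * (vnorm z)^2)"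
proof -
  have Az: "A *\<^sub>v z \<in> carrier_vec n" using A z by simp
  have "\<bar>scalar_prod z (A *\<^sub>v z)\<bar> \<le> vnorm z * vnorm (A *\<^sub>v z)" by (rule scalar_cs[OF z Az])
  also have "\<dots> \<le> vnorm z * (opnorm A * vnorm z)"
    by (rule mult_left_mono[OF opnorm_bound[OF A z] vnorm_sq(2)[OF z]])
  finally show ?thesis by (simp add: power2_eq_square algebra_simps)
qed


lemma units_minv:
  fixes A :: "real mat"
  assumes A: "A \<in> carrier_mat n n" and U: "A \<in> Units (ring_mat TYPE(real) n ())"
  shows "minv A \<in> carrier_mat n n" "A * minv A = 1\<^sub>m n" "minv A * A = 1\<^sub>m n"
proof -
  obtain B where B: "mat_inverse A = Some B"
    using mat_inverse(1)[OF A, where b="()"] U by (cases "mat_inverse A") auto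
  have "A * B = 1\<^sub>m n \<and> B * A = 1\<^sub>m n \<and> B \<in> carrier_mat n n" by (rule mat_inverse(2)[OF A B])
  then show "minv A \<in> carrier_mat n n" "A * minv A = 1\<^sub>m n" "minv A * A = 1\<^sub>m n"
    unfolding minv_def B by auto
qed

lemma invertible_units:
  fixes A :: "real mat"
  assumes A: "A \<in> carrier_mat n n" and inv: "invertible_mat A"
  shows "A \<in> Units (ring_mat TYPE(real) n ())"
proof -
  obtain B where AB: "A * B = 1\<^sub>m (dim_row A)" and BA: "B * A = 1\<^sub>m (dim_row B)"
    using inv unfolding invertible_mat_def inverts_mat_def by auto
  have "dim_col B = n" using arg_cong[OF AB, of dim_col] A by simp
  moreover have "dim_row B = n" using arg_cong[OF BA, of dim_col] A by simp
  ultimately have Bc: "B \<in> carrier_mat n n" by auto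
  show ?thesis unfolding Units_def ring_mat_simps
    using A Bc AB BA by auto
qed

lemma pd_units:
  fixes R :: "real mat"
  assumes R: "R \<in> carrier_mat n n" and pd: "pos_def R"
  shows "R \<in> Units (ring_mat TYPE(real) n ())"
proof -
  have "Determinant.det R \<noteq> 0"
  proof
    assume "Determinant.det R = 0"
    then obtain v where v: "v \<in> carrier_vec n" "v \<noteq> 0\<^sub>v n" "R *\<^sub>v v = 0\<^sub>v n"
      using det_0_iff_vec_prod_zero[OF R] by auto
    have "scalar_prod v (R *\<^sub>v v) > 0" using pd v R unfolding pos_def_def by auto
    moreover have "scalar_prod v (R *\<^sub>v v) = 0" using v by simp
    ultimately show False by simp
  qed
  then show ?thesis by (rule det_non_zero_imp_unit[OF R])
qed

lemma sum_D:
  fixes Si S :: "real mat" and P :: "nat \<Rightarrow> real mat"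
  assumes Si: "Si \<in> carrier_mat M M" and S: "S \<in> carrier_mat M M" and SiS: "Si * S = 1\<^sub>m M"
    and P: "\<And>k. k < N \<Longrightarrow> P k \<in> carrier_mat M M"
    and Se: "\<And>e d. e < M \<Longrightarrow> d < M \<Longrightarrow> S $$ (e,d) = (1 / real N) * (\<Sum>k<N. P k $$ (e,d))"
    and N: "N > 0" and cd: "c < M" "d < M"
  shows "(\<Sum>k<N. (Si * P k) $$ (c,d)) = (if c = d then real N else 0)"
proof -
  have ent: "\<And>k. k < N \<Longrightarrow> (Si * P k) $$ (c,d) = (\<Sum>e<M. Si $$ (c,e) * P k $$ (e,d))"
  proof -
    fix k assume "k < N"
    then have Pk: "P k \<in> carrier_mat M M" by (rule P)
    then show "(Si * P k) $$ (c,d) = (\<Sum>e<M. Si $$ (c,e) * P k $$ (e,d))"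
      using Si cd by (simp add: scalar_prod_def lessThan_atLeast0)
  qed
  have "(\<Sum>k<N. (Si * P k) $$ (c,d)) = (\<Sum>k<N. \<Sum>e<M. Si $$ (c,e) * P k $$ (e,d))"
    using ent by simp
  also have "\<dots> = (\<Sum>e<M. Si $$ (c,e) * (\<Sum>k<N. P k $$ (e,d)))"
    by (subst sum.swap) (simp add: sum_distrib_left)
  also have "\<dots> = (\<Sum>e<M. Si $$ (c,e) * (real N * S $$ (e,d)))"
    using Se cd N by (intro sum.cong refl) simp
  also have "\<dots> = real N * (Si * S) $$ (c,d)"
    using Si S cd by (simp add: scalar_prod_def lessThan_atLeast0 sum_distrib_left algebra_simps)
  also have "\<dots> = (if c = d then real N else 0)" using SiS cd by simp
  finally show ?thesis .
qed


lemma young_abs: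
  fixes a b e :: real
  assumes "e > 0"
  shows "\<bar>a * b\<bar> \<le> (e * a^2 + b^2 / e) / 2"
proof -
  have "0 \<le> (e * \<bar>a\<bar> - \<bar>b\<bar>)^2" by simp
  then have h: "2 * e * \<bar>a\<bar> * \<bar>b\<bar> \<le> e^2 * a^2 + b^2"
    by (simp add: power2_eq_square algebra_simps)
  have eq: "(e * a^2 + b^2 / e) / 2 = (e^2 * a^2 + b^2) / (2 * e)"
    using assms by (simp add: field_simps power2_eq_square)
  have "\<bar>a * b\<bar> \<le> (e^2 * a^2 + b^2) / (2 * e)"
    using h assms by (simp add: abs_mult pos_le_divide_eq mult.commute mult.left_commute)
  then show ?thesis unfolding eq .
qed

lemma term_lb:
  fixes x a b e B :: real
  assumes "\<bar>x\<bar> \<le> B" "\<bar>a * b\<bar> \<le> e"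
  shows "a * x * b \<ge> - (B * e)"
proof -
  have "\<bar>a * x * b\<bar> = \<bar>x\<bar> * \<bar>a * b\<bar>" by (simp add: abs_mult)
  also have "\<dots> \<le> B * e" using assms by (intro mult_mono) auto
  finally show ?thesis by linarith
qed

lemma sum3_lin:
  fixes f g h :: "nat \<Rightarrow> nat \<Rightarrow> nat \<Rightarrow> real"
  shows "(\<Sum>k\<in>A. \<Sum>c\<in>C. \<Sum>d\<in>E. f k c d - (p * g k c d + q * h k c d))
    = (\<Sum>k\<in>A. \<Sum>c\<in>C. \<Sum>d\<in>E. f k c d) - p * (\<Sum>k\<in>A. \<Sum>c\<in>C. \<Sum>d\<in>E. g k c d)
      - q * (\<Sum>k\<in>A. \<Sum>c\<in>C. \<Sum>d\<in>E. h k c d)"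
  by (simp only: sum_subtractf sum.distrib sum_distrib_left)

lemma kh_bound:
  fixes Z :: "nat \<Rightarrow> nat \<Rightarrow> real" and D :: "nat \<Rightarrow> nat \<Rightarrow> nat \<Rightarrow> real"
  assumes N: "N > 0"
    and sumD: "\<And>c d. c < M \<Longrightarrow> d < M \<Longrightarrow> (\<Sum>k<N. D k c d) = (if c = d then real N else 0)"
    and bnd: "\<And>k c d. k < N \<Longrightarrow> c < M \<Longrightarrow> d < M \<Longrightarrow> \<bar>D k c d\<bar> \<le> B"
    and B0: "B \<ge> 0"
  shows "(\<Sum>k<N. \<Sum>c<M. \<Sum>d<M. Z k c * D k c d * Z k d)
     \<ge> 3 * N / 4 * (\<Sum>c<M. ((\<Sum>k<N. Z k c) / N)^2)
       - (4 * (B+1)^2 * M * (M+1) + (B+1) * M) * (\<Sum>k<N. \<Sum>c<M. (Z k c - (\<Sum>l<N. Z l c) / N)^2)"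
proof -
  define y where "y = (\<lambda>c. (\<Sum>k<N. Z k c) / N)"
  define W where "W = (\<lambda>k c. Z k c - y c)"
  define Sy where "Sy = (\<Sum>c<M. (y c)^2)"
  define Sw where "Sw = (\<Sum>k<N. \<Sum>c<M. (W k c)^2)"
  define B' where "B' = B + 1"
  define e where "e = 1 / (4 * B' * (M + 1))"
  have B'p: "B' > 0" unfolding B'_def using B0 by simp
  have ep: "e > 0" unfolding e_def using B'p by simp
  have Sy0: "Sy \<ge> 0" unfolding Sy_def by (simp add: sum_nonneg)
  have Sw0: "Sw \<ge> 0" unfolding Sw_def by (simp add: sum_nonneg)
  have ZyW: "\<And>k c. Z k c = y c + W k c" unfolding W_def by simp
  have pt: "\<And>k c d. k < N \<Longrightarrow> c < M \<Longrightarrow> d < M \<Longrightarrow> Z k c * D k c d * Z k d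
      \<ge> y c * D k c d * y d - ((B' * e) * (((y c)^2 + (y d)^2) / 2) + (B' / e + B') * (((W k c)^2 + (W k d)^2) / 2))"
  proof -
    fix k c d assume k: "k < N" and c: "c < M" and d: "d < M"
    have bx: "\<bar>D k c d\<bar> \<le> B'" using bnd[OF k c d] unfolding B'_def by simp
    have t1: "y c * D k c d * W k d \<ge> - (B' * ((e * (y c)^2 + (W k d)^2 / e) / 2))"
      by (rule term_lb[OF bx young_abs[OF ep]])
    have t2: "W k c * D k c d * y d \<ge> - (B' * ((e * (y d)^2 + (W k c)^2 / e) / 2))"
      using term_lb[OF bx young_abs[OF ep, of "y d" "W k c"]] by (simp add: mult.commute mult.left_commute)
    have t3: "W k c * D k c d * W k d \<ge> - (B' * ((1 * (W k c)^2 + (W k d)^2 / 1) / 2))"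
      by (rule term_lb[OF bx young_abs]) simp
    have "Z k c * D k c d * Z k d = y c * D k c d * y d + y c * D k c d * W k d + W k c * D k c d * y d + W k c * D k c d * W k d"
      unfolding ZyW by (simp add: algebra_simps)
    show "Z k c * D k c d * Z k d
      \<ge> y c * D k c d * y d - ((B' * e) * (((y c)^2 + (y d)^2) / 2) + (B' / e + B') * (((W k c)^2 + (W k d)^2) / 2))"
    proof -
      have r: "(B' * e) * (((y c)^2 + (y d)^2) / 2) + (B' / e + B') * (((W k c)^2 + (W k d)^2) / 2)
        = B' * ((e * (y c)^2 + (W k d)^2 / e) / 2) + B' * ((e * (y d)^2 + (W k c)^2 / e) / 2)
          + B' * ((1 * (W k c)^2 + (W k d)^2 / 1) / 2)"
        using ep by (simp add: field_simps)
      show ?thesis using t1 t2 t3 \<open>Z k c * D k c d * Z k d = _\<close> unfolding r by linarith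
    qed
  qed
  have s1: "(\<Sum>k<N. \<Sum>c<M. \<Sum>d<M. y c * D k c d * y d) = N * Sy"
  proof -
    have "(\<Sum>k<N. \<Sum>c<M. \<Sum>d<M. y c * D k c d * y d) = (\<Sum>c<M. \<Sum>k<N. \<Sum>d<M. y c * D k c d * y d)"
      by (rule sum.swap)
    also have "\<dots> = (\<Sum>c<M. \<Sum>d<M. \<Sum>k<N. y c * D k c d * y d)"
      by (rule sum.cong[OF refl]) (rule sum.swap)
    also have "\<dots> = (\<Sum>c<M. \<Sum>d<M. y c * (\<Sum>k<N. D k c d) * y d)"
      by (simp add: sum_distrib_left sum_distrib_right)
    also have "\<dots> = (\<Sum>c<M. \<Sum>d<M. if d = c then N * (y c)^2 else 0)"
      using sumD by (intro sum.cong refl) (auto simp: power2_eq_square)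
    also have "\<dots> = N * Sy" unfolding Sy_def by (simp add: sum_distrib_left)
    finally show ?thesis .
  qed
  have s2: "(\<Sum>k<N. \<Sum>c<M. \<Sum>d<M. ((y c)^2 + (y d)^2) / 2) = N * M * Sy"
  proof -
    have "(\<Sum>c<M. \<Sum>d<M. ((y c)^2 + (y d)^2) / 2) = ((\<Sum>c<M. \<Sum>d<M. (y c)^2) + (\<Sum>c<M. \<Sum>d<M. (y d)^2)) / 2"
      by (simp only: sum_divide_distrib[symmetric] sum.distrib)
    also have "\<dots> = M * Sy" unfolding Sy_def by (simp add: sum_distrib_left sum_distrib_right mult.commute)
    finally show ?thesis by simp
  qed
  have s3: "(\<Sum>k<N. \<Sum>c<M. \<Sum>d<M. ((W k c)^2 + (W k d)^2) / 2) = M * Sw"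
  proof -
    have "\<And>k. (\<Sum>c<M. \<Sum>d<M. ((W k c)^2 + (W k d)^2) / 2) = ((\<Sum>c<M. \<Sum>d<M. (W k c)^2) + (\<Sum>c<M. \<Sum>d<M. (W k d)^2)) / 2"
      by (simp only: sum_divide_distrib[symmetric] sum.distrib)
    also have "\<And>k. ((\<Sum>c<M. \<Sum>d<M. (W k c)^2) + (\<Sum>c<M. \<Sum>d<M. (W k d)^2)) / 2 = M * (\<Sum>c<M. (W k c)^2)"
      by (simp add: sum_distrib_left sum_distrib_right mult.commute)
    finally have "\<And>k. (\<Sum>c<M. \<Sum>d<M. ((W k c)^2 + (W k d)^2) / 2) = M * (\<Sum>c<M. (W k c)^2)" .
    then show ?thesis unfolding Sw_def by (simp add: sum_distrib_left)
  qed
  have "(\<Sum>k<N. \<Sum>c<M. \<Sum>d<M. Z k c * D k c d * Z k d)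
     \<ge> (\<Sum>k<N. \<Sum>c<M. \<Sum>d<M. y c * D k c d * y d - ((B' * e) * (((y c)^2 + (y d)^2) / 2) + (B' / e + B') * (((W k c)^2 + (W k d)^2) / 2)))"
    using pt by (intro sum_mono) auto
  also have "(\<Sum>k<N. \<Sum>c<M. \<Sum>d<M. y c * D k c d * y d - ((B' * e) * (((y c)^2 + (y d)^2) / 2) + (B' / e + B') * (((W k c)^2 + (W k d)^2) / 2)))
     = (\<Sum>k<N. \<Sum>c<M. \<Sum>d<M. y c * D k c d * y d) - B' * e * (\<Sum>k<N. \<Sum>c<M. \<Sum>d<M. ((y c)^2 + (y d)^2) / 2)
       - (B' / e + B') * (\<Sum>k<N. \<Sum>c<M. \<Sum>d<M. ((W k c)^2 + (W k d)^2) / 2)"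
    by (rule sum3_lin)
  also have "\<dots> = N * Sy - B' * e * (N * M * Sy) - (B' / e + B') * (M * Sw)"
    unfolding s1 s2 s3 ..
  finally have main: "(\<Sum>k<N. \<Sum>c<M. \<Sum>d<M. Z k c * D k c d * Z k d) \<ge> N * Sy - B' * e * (N * M * Sy) - (B' / e + B') * (M * Sw)" .
  have c1: "B' * e * (N * M * Sy) \<le> N / 4 * Sy"
  proof -
    have "B' * e * (N * M) = N * M / (4 * (M + 1))" unfolding e_def using B'p by simp
    also have "\<dots> \<le> N / 4" using N by (simp add: field_simps)
    finally show ?thesis using Sy0 by (metis mult.assoc mult_right_mono)
  qed
  have c2: "(B' / e + B') * (M * Sw) = (4 * (B+1)^2 * real M * (real M+1) + (B+1) * real M) * Sw"
    unfolding e_def B'_def using B0 by (simp add: field_simps power2_eq_square)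
  have fin: "(\<Sum>k<N. \<Sum>c<M. \<Sum>d<M. Z k c * D k c d * Z k d) \<ge> 3 * real N / 4 * Sy - (4 * (B+1)^2 * real M * (real M+1) + (B+1) * real M) * Sw"
    using main c1 c2 by linarith
  then show ?thesis unfolding Sy_def Sw_def W_def y_def .
qed


lemma block_idx_lt:
  fixes k c N M :: nat
  assumes "k < N" "c < M"
  shows "k*M+c < N*M"
proof -
  have "k*M + c < k*M + M" using assms by simp
  also have "\<dots> = (k+1)*M" by simp
  also have "\<dots> \<le> N*M" using assms by (intro mult_right_mono) auto
  finally show ?thesis .
qed

lemma norm_split:
  fixes Z :: "nat \<Rightarrow> nat \<Rightarrow> real"
  assumes N: "N > 0"
  shows "(\<Sum>k<N. \<Sum>c<M. (Z k c)^2) = N * (\<Sum>c<M. ((\<Sum>k<N. Z k c) / N)^2) + (\<Sum>k<N. \<Sum>c<M. (Z k c - (\<Sum>l<N. Z l c) / N)^2)"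
proof -
  have per: "\<And>c. (\<Sum>k<N. (Z k c)^2) = N * ((\<Sum>k<N. Z k c) / N)^2 + (\<Sum>k<N. (Z k c - (\<Sum>l<N. Z l c) / N)^2)"
  proof -
    fix c
    define s where "s = (\<Sum>l<N. Z l c)"
    define y where "y = s / N"
    have sy: "s = N * y" unfolding y_def using N by simp
    have "(\<Sum>k<N. (Z k c - y)^2) = (\<Sum>k<N. (Z k c)^2) - 2 * y * s + N * y^2"
      unfolding s_def by (simp add: power2_eq_square algebra_simps sum.distrib sum_subtractf sum_distrib_left)
    then have "(\<Sum>k<N. (Z k c)^2) = N * y^2 + (\<Sum>k<N. (Z k c - y)^2)"
      unfolding sy by (simp add: power2_eq_square algebra_simps)
    then show "?thesis c" unfolding y_def s_def .
  qed
  have "(\<Sum>k<N. \<Sum>c<M. (Z k c)^2) = (\<Sum>c<M. \<Sum>k<N. (Z k c)^2)" by (rule sum.swap)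
  also have "\<dots> = (\<Sum>c<M. N * ((\<Sum>k<N. Z k c) / N)^2 + (\<Sum>k<N. (Z k c - (\<Sum>l<N. Z l c) / N)^2))"
    using per by simp
  also have "\<dots> = N * (\<Sum>c<M. ((\<Sum>k<N. Z k c) / N)^2) + (\<Sum>c<M. \<Sum>k<N. (Z k c - (\<Sum>l<N. Z l c) / N)^2)"
    by (simp add: sum.distrib sum_distrib_left)
  also have "(\<Sum>c<M. \<Sum>k<N. (Z k c - (\<Sum>l<N. Z l c) / N)^2) = (\<Sum>k<N. \<Sum>c<M. (Z k c - (\<Sum>l<N. Z l c) / N)^2)"
    by (rule sum.swap)
  finally show ?thesis .
qed

lemma kron_qf:
  fixes Lb :: "real mat" and z :: "real Matrix.vec"
  assumes Lb: "Lb \<in> carrier_mat N N"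
  shows "(\<Sum>i<N*M. \<Sum>j<N*M. z$i * kron Lb (1\<^sub>m M) $$ (i,j) * z$j)
    = (\<Sum>c<M. \<Sum>k<N. \<Sum>l<N. z$(k*M+c) * Lb$$(k,l) * z$(l*M+c))"
proof -
  have "(\<Sum>i<N*M. \<Sum>j<N*M. z$i * kron Lb (1\<^sub>m M) $$ (i,j) * z$j)
    = (\<Sum>k<N. \<Sum>c<M. \<Sum>l<N. \<Sum>d<M. z$(k*M+c) * kron Lb (1\<^sub>m M) $$ (k*M+c,l*M+d) * z$(l*M+d))"
    by (rule sum_split_blocks2)
  also have "\<dots> = (\<Sum>k<N. \<Sum>c<M. \<Sum>l<N. \<Sum>d<M. if d = c then z$(k*M+c) * Lb$$(k,l) * z$(l*M+c) else 0)"
  proof (intro sum.cong refl)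
    fix k c l d assume "k \<in> {..<N}" "c \<in> {..<M}" "l \<in> {..<N}" "d \<in> {..<M}"
    then have k: "k < N" and c: "c < M" and l: "l < N" and d: "d < M" by auto
    show "z$(k*M+c) * kron Lb (1\<^sub>m M) $$ (k*M+c,l*M+d) * z$(l*M+d) = (if d = c then z$(k*M+c) * Lb$$(k,l) * z$(l*M+c) else 0)"
      using kron_entry[OF Lb block_idx_lt[OF k c] block_idx_lt[OF l d]] c d by auto
  qed
  also have "\<dots> = (\<Sum>k<N. \<Sum>c<M. \<Sum>l<N. z$(k*M+c) * Lb$$(k,l) * z$(l*M+c))"
    by simp
  also have "\<dots> = (\<Sum>c<M. \<Sum>k<N. \<Sum>l<N. z$(k*M+c) * Lb$$(k,l) * z$(l*M+c))"
    by (rule sum.swap)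
  finally show ?thesis .
qed

lemma block_qf:
  fixes F :: "real mat" and z :: "real Matrix.vec" and D :: "nat \<Rightarrow> real mat"
  assumes F: "\<And>i j. i < N*M \<Longrightarrow> j < N*M \<Longrightarrow> F $$ (i,j) = (if i div M = j div M then D (i div M) $$ (i mod M, j mod M) else 0)"
  shows "(\<Sum>i<N*M. \<Sum>j<N*M. z$i * F $$ (i,j) * z$j)
    = (\<Sum>k<N. \<Sum>c<M. \<Sum>d<M. z$(k*M+c) * D k $$ (c,d) * z$(k*M+d))"
proof -
  have "(\<Sum>i<N*M. \<Sum>j<N*M. z$i * F $$ (i,j) * z$j)
    = (\<Sum>k<N. \<Sum>c<M. \<Sum>l<N. \<Sum>d<M. z$(k*M+c) * F $$ (k*M+c,l*M+d) * z$(l*M+d))"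
    by (rule sum_split_blocks2)
  also have "\<dots> = (\<Sum>k<N. \<Sum>c<M. \<Sum>l<N. if l = k then (\<Sum>d<M. z$(k*M+c) * D k $$ (c,d) * z$(k*M+d)) else 0)"
  proof (intro sum.cong refl)
    fix k c l assume "k \<in> {..<N}" "c \<in> {..<M}" "l \<in> {..<N}"
    then have k: "k < N" and c: "c < M" and l: "l < N" by auto
    have "\<And>d. d < M \<Longrightarrow> F $$ (k*M+c,l*M+d) = (if k = l then D k $$ (c,d) else 0)"
      using F[OF block_idx_lt[OF k c] block_idx_lt[OF l _]] c by auto
    then show "(\<Sum>d<M. z$(k*M+c) * F $$ (k*M+c,l*M+d) * z$(l*M+d)) =
       (if l = k then (\<Sum>d<M. z$(k*M+c) * D k $$ (c,d) * z$(k*M+d)) else 0)"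
      by (auto intro: sum.neutral)
  qed
  also have "\<dots> = (\<Sum>k<N. \<Sum>c<M. \<Sum>d<M. z$(k*M+c) * D k $$ (c,d) * z$(k*M+d))"
    by simp
  finally show ?thesis .
qed


lemma time_bound:
  fixes a b t1 t2 l C :: real
  assumes a: "a > 0" and b: "b > 0" and tt: "t2 < t1" and l: "l > 0" and C: "C + 1 > 0"
  shows "\<exists>tK::nat. \<forall>t\<ge>tK. b / (real t + 1) powr t2 * l \<ge> a / (real t + 1) powr t1 * (C+1)"
proof -
  define d where "d = t1 - t2"
  have d: "d > 0" unfolding d_def using tt by simp
  define X where "X = a * (C+1) / (b * l)"
  have X: "X > 0" unfolding X_def using a b l C by simp
  define tK where "tK = nat \<lceil>X powr (1/d)\<rceil>"
  show ?thesis
  proof (intro exI[of _ tK] allI impI)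
    fix t :: nat assume t: "t \<ge> tK"
    define s where "s = real t + 1"
    have s: "s > 0" unfolding s_def by simp
    have "X powr (1/d) \<le> real tK" unfolding tK_def by (rule real_nat_ceiling_ge)
    also have "\<dots> \<le> s" using t unfolding s_def by simp
    finally have sX: "X powr (1/d) \<le> s" .
    have "X = (X powr (1/d)) powr d" using X d by (simp add: powr_powr)
    also have "\<dots> \<le> s powr d" by (rule powr_mono2) (use d sX in auto)
    finally have Xs: "X \<le> s powr d" .
    have st1: "s powr t1 = s powr d * s powr t2" unfolding d_def by (simp add: powr_add[symmetric])
    have p2: "s powr t2 > 0" and pd: "s powr d > 0" using s by auto
    have "a * (C+1) \<le> b * l * s powr d"
      using Xs b l unfolding X_def by (simp add: divide_le_eq mult.commute mult.left_commute)
    then have "a * (C+1) / (s powr d * s powr t2) \<le> b * l * s powr d / (s powr d * s powr t2)"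
      using p2 pd by (intro divide_right_mono) auto
    then show "b / (real t + 1) powr t2 * l \<ge> a / (real t + 1) powr t1 * (C+1)"
      unfolding s_def[symmetric] st1 using pd p2 by (simp add: field_simps)
  qed
qed


theorem proposition5p5:
  fixes N M :: nat and Md :: "nat \<Rightarrow> nat"
    and H R :: "nat \<Rightarrow> real mat"
    and G :: "(nat \<times> nat) set pmf"
    and a b \<tau>1 \<tau>2 \<epsilon>1 :: real
  assumes N2: "N \<ge> 2"
    and H_dim: "\<And>n. n < N \<Longrightarrow> H n \<in> carrier_mat (Md n) M"
    and R_dim: "\<And>n. n < N \<Longrightarrow> R n \<in> carrier_mat (Md n) (Md n)"
    and R_sym: "\<And>n. n < N \<Longrightarrow> transpose_mat (R n) = R n"
    and R_pd: "\<And>n. n < N \<Longrightarrow> pos_def (R n)"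
    and Sigma_inv: "invertible_mat
          (Matrix.mat M M (\<lambda>ij. (1 / real N) *
             (\<Sum>n<N. (transpose_mat (H n) * minv (R n) * H n) $$ ij)))"
    and G_simple: "\<And>E. E \<in> set_pmf G \<Longrightarrow> simple_graph N E"
    and lam2: "lambda2 (expected_laplacian N G) > 0"
    and ab: "a > 0" "b > 0"
    and taus: "0 < \<tau>2" "\<tau>2 \<le> \<tau>1" "\<tau>1 \<le> 1"
    and eps1: "\<epsilon>1 > 0" "\<tau>1 > \<tau>2 + 1 / (2 + \<epsilon>1) + 1 / 2"
  shows "let \<alpha> = (\<lambda>t::nat. a / (real t + 1) powr \<tau>1);
             \<beta> = (\<lambda>t::nat. b / (real t + 1) powr \<tau>2);
             Lbar = expected_laplacian N G;
             Sigma = Matrix.mat M M (\<lambda>ij. (1 / real N) *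
                       (\<Sum>n<N. (transpose_mat (H n) * minv (R n) * H n) $$ ij));
             K = (\<lambda>n. minv Sigma * transpose_mat (H n) * minv (R n));
             KK = diag_block_mat (map K [0..<N]);
             HH = diag_block_mat (map H [0..<N])
         in \<exists>\<epsilon>K > 0. \<exists>tK :: nat. \<exists>cK > 0.
              \<forall>t \<ge> tK. \<forall>z \<in> carrier_vec (N * M).
                \<forall>Kt \<in> carrier_mat (N * M) (\<Sum>n<N. Md n).
                  opnorm (Kt * HH - KK * HH) \<le> \<epsilon>K \<longrightarrow>
                  z \<bullet> ((\<beta> t \<cdot>\<^sub>m kron Lbar (1\<^sub>m M) + \<alpha> t \<cdot>\<^sub>m (Kt * HH)) *\<^sub>v z)
                    \<ge> cK * \<alpha> t * (vnorm z)\<^sup>2"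
proof -
  define \<alpha> where "\<alpha> = (\<lambda>t::nat. a / (real t + 1) powr \<tau>1)"
  define \<beta> where "\<beta> = (\<lambda>t::nat. b / (real t + 1) powr \<tau>2)"
  define Lbar where "Lbar = expected_laplacian N G"
  define Sigma where "Sigma = Matrix.mat M M (\<lambda>ij. (1 / real N) *
                       (\<Sum>n<N. (transpose_mat (H n) * minv (R n) * H n) $$ ij))"
  define K where "K = (\<lambda>n. minv Sigma * transpose_mat (H n) * minv (R n))"
  define KK where "KK = diag_block_mat (map K [0..<N])"
  define HH where "HH = diag_block_mat (map H [0..<N])"
  have main: "\<exists>\<epsilon>K > 0. \<exists>tK :: nat. \<exists>cK > 0.
              \<forall>t \<ge> tK. \<forall>z \<in> carrier_vec (N * M).
                \<forall>Kt \<in> carrier_mat (N * M) (\<Sum>n<N. Md n).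
                  opnorm (Kt * HH - KK * HH) \<le> \<epsilon>K \<longrightarrow>
                  z \<bullet> ((\<beta> t \<cdot>\<^sub>m kron Lbar (1\<^sub>m M) + \<alpha> t \<cdot>\<^sub>m (Kt * HH)) *\<^sub>v z)
                    \<ge> cK * \<alpha> t * (vnorm z)\<^sup>2"
  proof -
    have N0: "N > 0" using N2 by simp
    have Lc: "Lbar \<in> carrier_mat N N" unfolding Lbar_def by (rule lbar_props(1)[OF G_simple])
    have Ls: "\<And>i j. i < N \<Longrightarrow> j < N \<Longrightarrow> Lbar $$ (i,j) = Lbar $$ (j,i)"
      unfolding Lbar_def by (rule lbar_props(2)[OF G_simple])
    have Lr: "\<And>i. i < N \<Longrightarrow> (\<Sum>j<N. Lbar $$ (i,j)) = 0"
      unfolding Lbar_def by (rule lbar_props(3)[OF G_simple])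
    have Lp: "\<And>x. (\<Sum>i<N. \<Sum>j<N. x i * Lbar $$ (i,j) * x j) \<ge> 0"
      unfolding Lbar_def by (rule lbar_props(4)[OF G_simple])
    have lam2': "lambda2 Lbar > 0" unfolding Lbar_def by (rule lam2)
    obtain l where l: "l > 0" and lgap: "\<And>x. (\<Sum>i<N. \<Sum>j<N. x i * Lbar$$(i,j) * x j) \<ge> l * (\<Sum>k<N. (x k - (\<Sum>m<N. x m) / N)^2)"
      using spectral_gap[OF Lc N2 Ls Lr Lp lam2'] by blast
    define P where "P = (\<lambda>n. transpose_mat (H n) * minv (R n) * H n)"
    have Sc: "Sigma \<in> carrier_mat M M" unfolding Sigma_def by simp
    have SU: "Sigma \<in> Units (ring_mat TYPE(real) M ())"
      by (rule invertible_units[OF Sc]) (use Sigma_inv in \<open>simp add: Sigma_def\<close>)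
    note Si = units_minv[OF Sc SU]
    have Rinv: "\<And>n. n < N \<Longrightarrow> minv (R n) \<in> carrier_mat (Md n) (Md n)"
      using units_minv(1)[OF R_dim pd_units[OF R_dim R_pd]] by blast
    have Ht: "\<And>n. n < N \<Longrightarrow> transpose_mat (H n) \<in> carrier_mat M (Md n)"
      using H_dim by auto
    have Kc: "\<And>n. n < N \<Longrightarrow> K n \<in> carrier_mat M (Md n)"
      unfolding K_def using Si(1) Ht Rinv by (meson mult_carrier_mat)
    define D where "D = (\<lambda>n. K n * H n)"
    have Dc: "\<And>n. n < N \<Longrightarrow> D n \<in> carrier_mat M M"
      unfolding D_def using Kc H_dim by (meson mult_carrier_mat)
    have Pc: "\<And>n. n < N \<Longrightarrow> P n \<in> carrier_mat M M"
      unfolding P_def using Ht Rinv H_dim by (meson mult_carrier_mat)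
    have DP: "\<And>n. n < N \<Longrightarrow> D n = minv Sigma * P n"
    proof -
      fix n assume n: "n < N"
      note c = Si(1) Ht[OF n] Rinv[OF n] H_dim[OF n]
      have "D n = minv Sigma * transpose_mat (H n) * minv (R n) * H n" unfolding D_def K_def ..
      also have "\<dots> = minv Sigma * (transpose_mat (H n) * minv (R n) * H n)"
        using c by (simp add: assoc_mult_mat[of _ M M _ "Md n"] assoc_mult_mat[of _ M "Md n" _ "Md n"] mult_carrier_mat)
      finally show "D n = minv Sigma * P n" unfolding P_def .
    qed
    have Se: "\<And>e d. e < M \<Longrightarrow> d < M \<Longrightarrow> Sigma $$ (e,d) = (1 / real N) * (\<Sum>k<N. P k $$ (e,d))"
      unfolding Sigma_def P_def by simp
    have sumD: "\<And>c d. c < M \<Longrightarrow> d < M \<Longrightarrow> (\<Sum>k<N. D k $$ (c,d)) = (if c = d then real N else 0)"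
    proof -
      fix c d assume c: "c < M" and d: "d < M"
      have "(\<Sum>k<N. D k $$ (c,d)) = (\<Sum>k<N. (minv Sigma * P k) $$ (c,d))" using DP by simp
      also have "\<dots> = (if c = d then real N else 0)"
        by (rule sum_D[OF Si(1) Sc Si(3) Pc Se N0 c d])
      finally show "(\<Sum>k<N. D k $$ (c,d)) = (if c = d then real N else 0)" .
    qed
    have KKHH: "KK * HH = diag_block_mat (map D [0..<N])"
      unfolding KK_def HH_def D_def by (rule dbm_mult) (use Kc H_dim in auto)
    have PE: "\<And>i j. i < N*M \<Longrightarrow> j < N*M \<Longrightarrow> (KK * HH) $$ (i,j) = (if i div M = j div M then D (i div M) $$ (i mod M, j mod M) else 0)"
    proof -
      fix i j assume i: "i < N*M" and j: "j < N*M"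
      have idiv: "i div M < N" using i by (simp add: less_mult_imp_div_less)
      have "(KK * HH) $$ (i,j) = (if i div M = j div M then (map D [0..<N] ! (i div M)) $$ (i mod M, j mod M) else 0)"
        unfolding KKHH by (rule dbm_entry) (use Dc i j in auto)
      then show "(KK * HH) $$ (i,j) = (if i div M = j div M then D (i div M) $$ (i mod M, j mod M) else 0)"
        using idiv by simp
    qed
    have sl1: "sum_list (map Md [0..<N]) = (\<Sum>n<N. Md n)"
      by (simp add: sum_list_distinct_conv_sum_set atLeast0LessThan)
    have sl2: "sum_list (map (\<lambda>_. M) [0..<N]) = N * M" by (simp add: sum_list_triv)
    have HHc: "HH \<in> carrier_mat (\<Sum>n<N. Md n) (N*M)"
      unfolding HH_def using dbm_dims[of "[0..<N]" H Md "\<lambda>_. M"] H_dim sl1 sl2 by simp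
    have KKc: "KK \<in> carrier_mat (N*M) (\<Sum>n<N. Md n)"
      unfolding KK_def using dbm_dims[of "[0..<N]" K "\<lambda>_. M" Md] Kc sl1 sl2 by simp
    have PPc: "KK * HH \<in> carrier_mat (N*M) (N*M)" using KKc HHc by simp
    have Ac: "kron Lbar (1\<^sub>m M) \<in> carrier_mat (N*M) (N*M)" using Lc unfolding kron_def by simp
    define B where "B = (\<Sum>n<N. \<Sum>c<M. \<Sum>d<M. \<bar>D n $$ (c,d)\<bar>)"
    have B0: "B \<ge> 0" unfolding B_def by (simp add: sum_nonneg)
    have Bb: "\<And>n c d. n < N \<Longrightarrow> c < M \<Longrightarrow> d < M \<Longrightarrow> \<bar>D n $$ (c,d)\<bar> \<le> B"
    proof -
      fix n c d assume n: "n < N" and c: "c < M" and d: "d < M"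
      have "\<bar>D n $$ (c,d)\<bar> \<le> (\<Sum>d'<M. \<bar>D n $$ (c,d')\<bar>)" using d by (intro member_le_sum) auto
      also have "\<dots> \<le> (\<Sum>c'<M. \<Sum>d'<M. \<bar>D n $$ (c',d')\<bar>)"
        using c by (intro member_le_sum[of c "{..<M}" "\<lambda>c'. \<Sum>d'<M. \<bar>D n $$ (c',d')\<bar>"]) (auto intro: sum_nonneg)
      also have "\<dots> \<le> B" unfolding B_def
        using n by (intro member_le_sum[of n "{..<N}" "\<lambda>n. \<Sum>c'<M. \<Sum>d'<M. \<bar>D n $$ (c',d')\<bar>"]) (auto intro: sum_nonneg)
      finally show "\<bar>D n $$ (c,d)\<bar> \<le> B" .
    qed
    define C where "C = 4 * (B+1)^2 * real M * (real M + 1) + (B+1) * real M"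
    have C0: "C \<ge> 0" unfolding C_def using B0 by simp
    have tt: "\<tau>2 < \<tau>1" using eps1 by (smt (verit) divide_pos_pos)
    obtain tK :: nat where tK: "\<And>t. t \<ge> tK \<Longrightarrow> \<beta> t * l \<ge> \<alpha> t * (C+1)"
      using time_bound[OF ab(1) ab(2) tt l, of C] C0 unfolding \<alpha>_def \<beta>_def by auto
    have key: "\<And>t (z::real Matrix.vec) Kt. tK \<le> t \<Longrightarrow> z \<in> carrier_vec (N*M) \<Longrightarrow> Kt \<in> carrier_mat (N * M) (\<Sum>n<N. Md n)
       \<Longrightarrow> opnorm (Kt * HH - KK * HH) \<le> 1/2 \<Longrightarrow>
       z \<bullet> ((\<beta> t \<cdot>\<^sub>m kron Lbar (1\<^sub>m M) + \<alpha> t \<cdot>\<^sub>m (Kt * HH)) *\<^sub>v z) \<ge> 1/4 * \<alpha> t * (vnorm z)\<^sup>2"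
    proof -
      fix t and z :: "real Matrix.vec" and Kt
      assume t: "tK \<le> t" and z: "z \<in> carrier_vec (N*M)" and Kt: "Kt \<in> carrier_mat (N * M) (\<Sum>n<N. Md n)"
        and on: "opnorm (Kt * HH - KK * HH) \<le> 1/2"
      define n where "n = N*M"
      define Dl where "Dl = Kt * HH - KK * HH"
      define A where "A = kron Lbar (1\<^sub>m M)"
      define PP where "PP = KK * HH"
      have KtH: "Kt * HH \<in> carrier_mat n n" using Kt HHc unfolding n_def by simp
      have Dlc: "Dl \<in> carrier_mat n n" unfolding Dl_def n_def by (rule minus_carrier_mat[OF PPc])
      have Ac': "A \<in> carrier_mat n n" using Ac unfolding A_def n_def .
      have PPc': "PP \<in> carrier_mat n n" using PPc unfolding PP_def n_def .
      have z': "z \<in> carrier_vec n" using z unfolding n_def .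
      define X where "X = \<beta> t \<cdot>\<^sub>m A + \<alpha> t \<cdot>\<^sub>m (Kt * HH)"
      have Xc: "X \<in> carrier_mat n n" unfolding X_def using Ac' KtH by simp
      have Xe: "\<And>i j. i < n \<Longrightarrow> j < n \<Longrightarrow> X $$ (i,j) = \<beta> t * A $$ (i,j) + \<alpha> t * (PP $$ (i,j) + Dl $$ (i,j))"
      proof -
        fix i j assume ij: "i < n" "j < n"
        have "Dl $$ (i,j) = (Kt*HH)$$(i,j) - PP$$(i,j)" unfolding Dl_def PP_def by (intro index_minus_mat) (use PPc' ij in \<open>auto simp: PP_def\<close>)
        moreover have "X $$ (i,j) = \<beta> t * A$$(i,j) + \<alpha> t * (Kt*HH)$$(i,j)" unfolding X_def
        proof -
          have d: "dim_row A = n" "dim_col A = n" "dim_row (Kt*HH) = n" "dim_col (Kt*HH) = n"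
            using Ac' KtH by auto
          show "(\<beta> t \<cdot>\<^sub>m A + \<alpha> t \<cdot>\<^sub>m (Kt * HH)) $$ (i, j) = \<beta> t * A$$(i,j) + \<alpha> t * (Kt*HH)$$(i,j)"
            using ij by (simp only: index_add_mat index_smult_mat d)
        qed
        ultimately show "X $$ (i,j) = \<beta> t * A $$ (i,j) + \<alpha> t * (PP $$ (i,j) + Dl $$ (i,j))" by simp
      qed
      define qf where "qf = (\<lambda>Y. \<Sum>i<n. \<Sum>j<n. z$i * Y $$ (i,j) * z$j)"
      have qX: "scalar_prod z (X *\<^sub>v z) = \<beta> t * qf A + \<alpha> t * qf PP + \<alpha> t * qf Dl"
      proof -
        have "scalar_prod z (X *\<^sub>v z) = (\<Sum>i<n. \<Sum>j<n. z$i * X $$ (i,j) * z$j)" by (rule qf_entries[OF Xc z'])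
        also have "\<dots> = (\<Sum>i<n. \<Sum>j<n. \<beta> t * (z$i * A $$ (i,j) * z$j) + \<alpha> t * (z$i * PP $$ (i,j) * z$j) + \<alpha> t * (z$i * Dl $$ (i,j) * z$j))"
          using Xe by (intro sum.cong refl) (simp add: algebra_simps)
        also have "\<dots> = \<beta> t * qf A + \<alpha> t * qf PP + \<alpha> t * qf Dl"
          unfolding qf_def by (simp only: sum.distrib sum_distrib_left[symmetric])
        finally show ?thesis .
      qed
      define Z where "Z = (\<lambda>k c. z $ (k*M+c))"
      define Sy where "Sy = (\<Sum>c<M. ((\<Sum>k<N. Z k c) / N)^2)"
      define Sw where "Sw = (\<Sum>k<N. \<Sum>c<M. (Z k c - (\<Sum>l<N. Z l c) / N)^2)"
      have Sy0: "Sy \<ge> 0" unfolding Sy_def by (simp add: sum_nonneg)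
      have Sw0: "Sw \<ge> 0" unfolding Sw_def by (simp add: sum_nonneg)
      have nz: "(vnorm z)^2 = N * Sy + Sw"
      proof -
        have "(vnorm z)^2 = (\<Sum>i<N*M. (z$i)^2)" using vnorm_sq(1)[OF z] .
        also have "\<dots> = (\<Sum>k<N. \<Sum>c<M. (Z k c)^2)" unfolding Z_def by (rule sum_split_blocks)
        also have "\<dots> = N * Sy + Sw" unfolding Sy_def Sw_def by (rule norm_split[OF N0])
        finally show ?thesis .
      qed
      have qA: "qf A \<ge> l * Sw"
      proof -
        have "qf A = (\<Sum>c<M. \<Sum>k<N. \<Sum>l<N. Z k c * Lbar$$(k,l) * Z l c)"
          unfolding qf_def A_def n_def Z_def by (rule kron_qf[OF Lc])
        also have "\<dots> \<ge> (\<Sum>c<M. l * (\<Sum>k<N. (Z k c - (\<Sum>m<N. Z m c) / N)^2))"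
          by (rule sum_mono) (rule lgap)
        also have "(\<Sum>c<M. l * (\<Sum>k<N. (Z k c - (\<Sum>m<N. Z m c) / N)^2)) = l * Sw"
          unfolding Sw_def by (simp add: sum_distrib_left sum.swap[of _ "{..<M}" "{..<N}"])
        finally show ?thesis .
      qed
      have qP: "qf PP \<ge> 3 * real N / 4 * Sy - C * Sw"
      proof -
        have "qf PP = (\<Sum>k<N. \<Sum>c<M. \<Sum>d<M. z$(k*M+c) * D k $$ (c,d) * z$(k*M+d))"
          unfolding qf_def n_def PP_def by (rule block_qf) (rule PE)
        also have "\<dots> = (\<Sum>k<N. \<Sum>c<M. \<Sum>d<M. Z k c * (\<lambda>k c d. D k $$ (c,d)) k c d * Z k d)"
          unfolding Z_def by simp
        also have "\<dots> \<ge> 3 * real N / 4 * (\<Sum>c<M. ((\<Sum>k<N. Z k c) / N)^2)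
       - (4 * (B+1)^2 * real M * (real M+1) + (B+1) * real M) * (\<Sum>k<N. \<Sum>c<M. (Z k c - (\<Sum>l<N. Z l c) / N)^2)"
          by (rule kh_bound[OF N0, where D="\<lambda>k c d. D k $$ (c,d)"]) (use sumD Bb B0 in auto)
        finally show ?thesis unfolding Sy_def Sw_def C_def by simp
      qed
      have qD: "qf Dl \<ge> - (1/2) * (vnorm z)^2"
      proof -
        have "qf Dl = scalar_prod z (Dl *\<^sub>v z)" unfolding qf_def by (rule qf_entries[OF Dlc z', symmetric])
        also have "\<dots> \<ge> - (opnorm Dl * (vnorm z)^2)" by (rule qf_opnorm[OF Dlc z'])
        finally have "qf Dl \<ge> - (opnorm Dl * (vnorm z)^2)" .
        moreover have "opnorm Dl * (vnorm z)^2 \<le> 1/2 * (vnorm z)^2"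
          using on unfolding Dl_def by (intro mult_right_mono) auto
        ultimately show ?thesis by simp
      qed
      have a0: "\<alpha> t > 0" unfolding \<alpha>_def using ab by simp
      have b0: "\<beta> t > 0" unfolding \<beta>_def using ab by simp
      have tkt: "\<beta> t * l \<ge> \<alpha> t * (C+1)" using tK[OF t] .
      define u where "u = \<alpha> t * Sy"
      define w where "w = \<alpha> t * Sw"
      define cw where "cw = C * w"
      define nu where "nu = real N * u"
      have h1: "\<beta> t * qf A \<ge> cw + w"
      proof -
        have "\<beta> t * qf A \<ge> \<beta> t * (l * Sw)" using qA b0 by (intro mult_left_mono) auto
        moreover have "\<beta> t * (l * Sw) \<ge> \<alpha> t * (C+1) * Sw" using tkt Sw0
          by (metis mult.assoc mult_right_mono)
        moreover have "\<alpha> t * (C+1) * Sw = cw + w" unfolding cw_def w_def by (simp add: algebra_simps)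
        ultimately show ?thesis by linarith
      qed
      have h2: "\<alpha> t * qf PP \<ge> 3/4 * nu - cw"
      proof -
        have "\<alpha> t * qf PP \<ge> \<alpha> t * (3 * real N / 4 * Sy - C * Sw)" using qP a0 by (intro mult_left_mono) auto
        moreover have "\<alpha> t * (3 * real N / 4 * Sy - C * Sw) = 3/4 * nu - cw"
          unfolding nu_def cw_def u_def w_def by (simp add: algebra_simps)
        ultimately show ?thesis by linarith
      qed
      have h3: "\<alpha> t * qf Dl \<ge> - (1/2) * nu - (1/2) * w"
      proof -
        have "\<alpha> t * qf Dl \<ge> \<alpha> t * (- (1/2) * (vnorm z)^2)" using qD a0 by (intro mult_left_mono) auto
        moreover have "\<alpha> t * (- (1/2) * (vnorm z)^2) = - (1/2) * nu - (1/2) * w"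
          unfolding nz nu_def u_def w_def by (simp add: algebra_simps)
        ultimately show ?thesis by linarith
      qed
      have rhs: "1/4 * \<alpha> t * (vnorm z)^2 = 1/4 * nu + 1/4 * w"
        unfolding nz nu_def u_def w_def by (simp add: algebra_simps)
      have w0: "w \<ge> 0" unfolding w_def using a0 Sw0 by simp
      have "scalar_prod z (X *\<^sub>v z) \<ge> 1/4 * \<alpha> t * (vnorm z)^2"
        unfolding qX rhs using h1 h2 h3 w0 by linarith
      then show "z \<bullet> ((\<beta> t \<cdot>\<^sub>m kron Lbar (1\<^sub>m M) + \<alpha> t \<cdot>\<^sub>m (Kt * HH)) *\<^sub>v z) \<ge> 1/4 * \<alpha> t * (vnorm z)\<^sup>2"
        unfolding X_def A_def .
    qed
    show ?thesis
      apply (rule exI[of _ "1/2::real"])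
      apply (rule conjI, simp)
      apply (rule exI[of _ tK])
      apply (rule exI[of _ "1/4::real"])
      apply (rule conjI, simp)
      using key by blast
  qed
  show ?thesis unfolding Let_def using main unfolding \<alpha>_def \<beta>_def Lbar_def Sigma_def K_def KK_def HH_def .
qed

end
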